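(* Let $(M_q,\widetilde B)$ be a quantum seed and $\mathrm{inv}\subseteq[1,N]\setminus\mathrm{ex}$. For each prime element $p\in\mathbb Z[q^{\pm1/2}]$ and each $k\in\mathrm{ex}$, $$\mathcal T_q(M_q)_\ge\cap\big(p\,\mathcal T_q(\mu_kM_q)_\ge\big)=\big(p\,\mathcal T_q(M_q)_\ge\big)\cap\mathcal T_q(\mu_kM_q)_\ge.$$
   Context: $\mathcal A^{1/2}_q=\mathbb Z[q^{\pm1/2}]$; $e_1,\dots,e_N$ standard basis of $\mathbb Z^N$. For a skew-symmetric integer matrix $\Lambda$, the based quantum torus $\mathcal T_q(\Lambda)$ is the $\mathcal A^{1/2}_q$-algebra with basis $X^f$, $f\in\mathbb Z^N$, and $X^fX^g=q^{\Lambda(f,g)/2}X^{f+g}$. A toric frame of a division algebra $\mathcal F_q$ over $\mathbb Q(q^{1/2})$ is a map $M_q:\mathbb Z^N\to\mathcal F_q$ such that for some (unique) skew-symmetric $\Lambda=:\Lambda_{M_q}\in M_N(\mathbb Z)$ there is an injective $\mathcal A^{1/2}_q$-algebra map $\mathcal T_q(\Lambda)\to\mathcal F_q$, $X^f\mapsto M_q(f)$, with $\mathcal F_q$ the skew field of fractions of its image. Fix $\mathrm{ex}\subseteq[1,N]$; $\widetilde B=(b_{ij})$ is an integer matrix with rows $[1,N]$, columns $\mathrm{ex}$, $k$-th column $b^k$. $(\Lambda,\widetilde B)$ is compatible if there are positive integers $d_j$ with $\sum_kb_{kj}\lambda_{ki}=\delta_{ij}d_j$ for all $i\in[1,N]$,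 $j\in\mathrm{ex}$; a quantum seed is $(M_q,\widetilde B)$ with $(\Lambda_{M_q},\widetilde B)$ compatible. For $k\in\mathrm{ex}$, $\mu_k(M_q)$ is the toric frame with matrix $E^\top\Lambda_{M_q}E$ ($E$: $e_{ij}=\delta_{ij}$ for $j\ne k$, $e_{kk}=-1$, $e_{ik}=\max(0,-b_{ik})$ for $i\ne k$) such that $\mu_k(M_q)(e_j)=M_q(e_j)$ for $j\ne k$ and $\mu_k(M_q)(e_k)=M_q(-e_k+[b^k]_+)+M_q(-e_k-[b^k]_-)$, where $[b]_\pm$ keeps the entries $b_i$ with $\pm b_i\ge0$ and sets the others to $0$. For a toric frame $M'_q$, $\mathcal T_q(M'_q)_\ge$ is the $\mathcal A^{1/2}_q$-subalgebra of $\mathcal F_q$ generated by $M'_q(e_i)$, $i\in[1,N]$, and $M'_q(e_j)^{-1}$, $j\in\mathrm{ex}\sqcup\mathrm{inv}$. *)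

theory Defs
  imports Main "HOL-Library.Function_Algebras"
begin

text \<open>Ambient data: a division ring 'f (the skew field F_q) together with a central
element t (playing the role of q^(1/2)) which is transcendental over Q.
Vectors of Z^N are functions nat => int supported on {1..N}.\<close>

definition laurent_ring :: "'f::division_ring \<Rightarrow> 'f set" where
  "laurent_ring t = {(\<Sum>k\<in>K. of_int (c k) * t powi k) | K c. finite K}"

definition central_transcendental :: "'f::division_ring \<Rightarrow> bool" where
  "central_transcendental t \<longleftrightarrow> t \<noteq> 0 \<and> (\<forall>x. t * x = x * t) \<and>
     (\<forall>K c. finite K \<longrightarrow> (\<Sum>k\<in>K. of_int (c k) * t powi k) = 0 \<longrightarrow> (\<forall>k\<in>K. c k = 0))"

definition A_dvd :: "'f::division_ring \<Rightarrow> 'f \<Rightarrow> 'f \<Rightarrow> bool" where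
  "A_dvd t a x \<longleftrightarrow> (\<exists>c\<in>laurent_ring t. x = a * c)"

text \<open>Prime element of the ring Z[q^(+-1/2)] (realised as laurent_ring t).\<close>
definition A_prime :: "'f::division_ring \<Rightarrow> 'f \<Rightarrow> bool" where
  "A_prime t p \<longleftrightarrow> p \<in> laurent_ring t \<and> p \<noteq> 0 \<and>
     \<not> (\<exists>u\<in>laurent_ring t. p * u = 1) \<and>
     (\<forall>a\<in>laurent_ring t. \<forall>b\<in>laurent_ring t. A_dvd t p (a * b) \<longrightarrow> A_dvd t p a \<or> A_dvd t p b)"

definition zvec :: "nat \<Rightarrow> (nat \<Rightarrow> int) set" where
  "zvec N = {f. \<forall>i. i \<notin> {1..N} \<longrightarrow> f i = 0}"

definition unitv :: "nat \<Rightarrow> nat \<Rightarrow> int" where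
  "unitv i = (\<lambda>j. if j = i then 1 else 0)"

definition bilin :: "nat \<Rightarrow> (nat \<Rightarrow> nat \<Rightarrow> int) \<Rightarrow> (nat \<Rightarrow> int) \<Rightarrow> (nat \<Rightarrow> int) \<Rightarrow> int" where
  "bilin N L f g = (\<Sum>i\<in>{1..N}. \<Sum>j\<in>{1..N}. f i * L i j * g j)"

definition skew_sym :: "nat \<Rightarrow> (nat \<Rightarrow> nat \<Rightarrow> int) \<Rightarrow> bool" where
  "skew_sym N L \<longleftrightarrow> (\<forall>i\<in>{1..N}. \<forall>j\<in>{1..N}. L i j = - L j i)"

definition sub_division_ring :: "'f::division_ring set \<Rightarrow> bool" where
  "sub_division_ring D \<longleftrightarrow> 0 \<in> D \<and> 1 \<in> D \<and> (\<forall>x\<in>D. \<forall>y\<in>D. x + y \<in> D \<and> x * y \<in> D) \<and>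
     (\<forall>x\<in>D. - x \<in> D \<and> inverse x \<in> D)"

text \<open>M is a toric frame with matrix L: the Z[q^(+-1/2)]-linear map X^f \<mapsto> M f from the
based quantum torus T_q(L) is a unital algebra map (multiplicativity on the basis),
injective (the M f are linearly independent over Z[q^(+-1/2)]), and F is the skew field
of fractions of the image (generated by it as a division ring).\<close>
definition toric_frame :: "'f::division_ring \<Rightarrow> nat \<Rightarrow> ((nat \<Rightarrow> int) \<Rightarrow> 'f) \<Rightarrow> (nat \<Rightarrow> nat \<Rightarrow> int) \<Rightarrow> bool" where
  "toric_frame t N M L \<longleftrightarrow> skew_sym N L \<and> M 0 = 1 \<and>
     (\<forall>f\<in>zvec N. \<forall>g\<in>zvec N. M f * M g = t powi (bilin N L f g) * M (f + g)) \<and>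
     (\<forall>S c. finite S \<longrightarrow> S \<subseteq> zvec N \<longrightarrow> (\<forall>f\<in>S. c f \<in> laurent_ring t) \<longrightarrow>
         (\<Sum>f\<in>S. c f * M f) = 0 \<longrightarrow> (\<forall>f\<in>S. c f = 0)) \<and>
     (\<forall>D. sub_division_ring D \<longrightarrow> t \<in> D \<longrightarrow> M ` zvec N \<subseteq> D \<longrightarrow> D = UNIV)"

definition compatible :: "nat \<Rightarrow> nat set \<Rightarrow> (nat \<Rightarrow> nat \<Rightarrow> int) \<Rightarrow> (nat \<Rightarrow> nat \<Rightarrow> int) \<Rightarrow> bool" where
  "compatible N ex L B \<longleftrightarrow> (\<exists>d::nat \<Rightarrow> int. (\<forall>j\<in>ex. d j > 0) \<and>
     (\<forall>i\<in>{1..N}. \<forall>j\<in>ex. (\<Sum>k\<in>{1..N}. B k j * L k i) = (if i = j then d j else 0)))"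

definition quantum_seed :: "'f::division_ring \<Rightarrow> nat \<Rightarrow> nat set \<Rightarrow> ((nat \<Rightarrow> int) \<Rightarrow> 'f) \<Rightarrow> (nat \<Rightarrow> nat \<Rightarrow> int) \<Rightarrow> bool" where
  "quantum_seed t N ex M B \<longleftrightarrow> (\<exists>L. toric_frame t N M L \<and> compatible N ex L B)"

definition bpos :: "nat \<Rightarrow> (nat \<Rightarrow> nat \<Rightarrow> int) \<Rightarrow> nat \<Rightarrow> nat \<Rightarrow> int" where
  "bpos N B k = (\<lambda>i. if i \<in> {1..N} then max 0 (B i k) else 0)"

definition bneg :: "nat \<Rightarrow> (nat \<Rightarrow> nat \<Rightarrow> int) \<Rightarrow> nat \<Rightarrow> nat \<Rightarrow> int" where
  "bneg N B k = (\<lambda>i. if i \<in> {1..N} then min 0 (B i k) else 0)"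

text \<open>Values of the mutated toric frame mu_k(M) on the standard basis vectors.\<close>
definition mut_basis :: "nat \<Rightarrow> ((nat \<Rightarrow> int) \<Rightarrow> 'f::division_ring) \<Rightarrow> (nat \<Rightarrow> nat \<Rightarrow> int) \<Rightarrow> nat \<Rightarrow> nat \<Rightarrow> 'f" where
  "mut_basis N M B k j = (if j = k
      then M (- unitv k + bpos N B k) + M (- unitv k - bneg N B k)
      else M (unitv j))"

text \<open>T_q(M')_\<ge>: the Z[q^(+-1/2)]-subalgebra generated by M'(e_i), i in [1,N], and
M'(e_j)^(-1), j in ex \<union> inv; here g j = M'(e_j).\<close>
inductive_set Tge :: "'f::division_ring \<Rightarrow> nat \<Rightarrow> nat set \<Rightarrow> nat set \<Rightarrow> (nat \<Rightarrow> 'f) \<Rightarrow> 'f set"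
  for t N ex inv g where
  scalar: "a \<in> laurent_ring t \<Longrightarrow> a \<in> Tge t N ex inv g"
| gen: "i \<in> {1..N} \<Longrightarrow> g i \<in> Tge t N ex inv g"
| geninv: "j \<in> ex \<union> inv \<Longrightarrow> inverse (g j) \<in> Tge t N ex inv g"
| add: "x \<in> Tge t N ex inv g \<Longrightarrow> y \<in> Tge t N ex inv g \<Longrightarrow> x + y \<in> Tge t N ex inv g"
| mult: "x \<in> Tge t N ex inv g \<Longrightarrow> y \<in> Tge t N ex inv g \<Longrightarrow> x * y \<in> Tge t N ex inv g"

definition smul_set :: "'f::division_ring \<Rightarrow> 'f set \<Rightarrow> 'f set" where
  "smul_set p S = {p * x | x. x \<in> S}"

end

theory Submission
  imports Defs
begin

lemma commute_powi:
  fixes t :: "'f::division_ring"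
  assumes "\<forall>x. t * x = x * t"
  shows "t powi i * x = x * t powi i"
proof -
  have tn: "t ^ n * x = x * t ^ n" for n
    by (induction n) (simp_all add: mult.assoc assms, metis assms mult.assoc)
  have ti: "inverse t * x = x * inverse t"
    by (rule mult_commute_imp_mult_inverse_commute) (simp add: assms)
  have "inverse t ^ n * x = x * inverse t ^ n" for n
    by (induction n) (simp_all add: mult.assoc ti, metis ti mult.assoc)
  then show ?thesis using tn by (simp add: power_int_def)
qed

context
  fixes t :: "'f::division_ring"
  assumes ct: "central_transcendental t"
begin

lemma t_nz: "t \<noteq> 0" using ct by (simp add: central_transcendental_def)
lemma t_comm: "t * x = x * t" using ct by (simp add: central_transcendental_def)
lemma tpow_comm: "t powi i * x = x * t powi i"
  using commute_powi t_comm by blast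

lemma tpow_add: "t powi (i + j) = t powi i * t powi j"
  using t_nz by (simp add: power_int_add)

lemma tpow_nz: "t powi i \<noteq> 0" using t_nz by simp

lemma LR_gen:
  assumes "finite I"
  shows "(\<Sum>i\<in>I. of_int (c i) * t powi (h i)) \<in> laurent_ring t"
proof -
  have "(\<Sum>i\<in>I. of_int (c i) * t powi (h i)) =
      (\<Sum>m\<in>h ` I. \<Sum>i\<in>{x \<in> I. h x = m}. of_int (c i) * t powi (h i))"
    by (rule sum.image_gen[OF assms])
  also have "\<dots> = (\<Sum>m\<in>h ` I. of_int (\<Sum>i\<in>{x \<in> I. h x = m}. c i) * t powi m)"
    by (intro sum.cong refl) (simp add: sum_distrib_right)
  finally have "\<exists>K c'. (\<Sum>i\<in>I. of_int (c i) * t powi (h i)) = (\<Sum>k\<in>K. of_int (c' k) * t powi k) \<and> finite K"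
    using assms by (intro exI[of _ "h ` I"] exI[of _ "\<lambda>m. \<Sum>i\<in>{x \<in> I. h x = m}. c i"]) simp
  then show ?thesis unfolding laurent_ring_def by blast
qed

lemma LR_elim:
  assumes "a \<in> laurent_ring t"
  obtains K c where "finite K" "a = (\<Sum>k\<in>K. of_int (c k) * t powi k)"
  using assms unfolding laurent_ring_def by blast

lemma LR_add: assumes "a \<in> laurent_ring t" "b \<in> laurent_ring t" shows "a + b \<in> laurent_ring t"
proof -
  obtain K c where K: "finite K" "a = (\<Sum>k\<in>K. of_int (c k) * t powi k)" using assms(1) LR_elim by blast
  obtain K' c' where K': "finite K'" "b = (\<Sum>k\<in>K'. of_int (c' k) * t powi k)" using assms(2) LR_elim by blast
  have "a + b = (\<Sum>i\<in>K <+> K'. of_int (case_sum c c' i) * t powi (case_sum id id i))"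
    using K K' by (simp add: sum.Plus comp_def)
  then show ?thesis using LR_gen[of "K <+> K'" "case_sum c c'" "case_sum id id"] K K' by simp
qed

lemma LR_mult: assumes "a \<in> laurent_ring t" "b \<in> laurent_ring t" shows "a * b \<in> laurent_ring t"
proof -
  obtain K c where K: "finite K" "a = (\<Sum>k\<in>K. of_int (c k) * t powi k)" using assms(1) LR_elim by blast
  obtain K' c' where K': "finite K'" "b = (\<Sum>k\<in>K'. of_int (c' k) * t powi k)" using assms(2) LR_elim by blast
  have "a * b = (\<Sum>i\<in>K. \<Sum>j\<in>K'. (of_int (c i) * t powi i) * (of_int (c' j) * t powi j))"
    using K K' by (simp add: sum_product)
  also have "\<dots> = (\<Sum>i\<in>K. \<Sum>j\<in>K'. of_int (c i * c' j) * t powi (i + j))"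
  proof (intro sum.cong refl)
    fix i j
    have "(of_int (c i) * t powi i) * (of_int (c' j) * t powi j) = of_int (c i) * (t powi i * of_int (c' j)) * t powi j"
      by (simp add: mult.assoc)
    also have "t powi i * of_int (c' j) = of_int (c' j) * t powi i" by (rule tpow_comm)
    finally show "(of_int (c i) * t powi i) * (of_int (c' j) * t powi j) = of_int (c i * c' j) * t powi (i + j)"
      by (simp add: tpow_add mult.assoc)
  qed
  also have "\<dots> = (\<Sum>x\<in>K \<times> K'. of_int ((\<lambda>(i,j). c i * c' j) x) * t powi ((\<lambda>(i,j). i + j) x))"
    by (simp add: sum.cartesian_product case_prod_beta)
  finally show ?thesis using LR_gen[of "K \<times> K'" "\<lambda>(i,j). c i * c' j" "\<lambda>(i,j). i+j"] K K' by simp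
qed

lemma LR_of_int_tpow: "of_int c * t powi i \<in> laurent_ring t"
  using LR_gen[of "{0::nat}" "\<lambda>_. c" "\<lambda>_. i"] by simp

lemma LR_tpow: "t powi i \<in> laurent_ring t"
  using LR_of_int_tpow[of 1 i] by simp

lemma LR_of_int: "of_int c \<in> laurent_ring t"
  using LR_of_int_tpow[of c 0] by simp

lemma LR_0: "0 \<in> laurent_ring t" using LR_of_int[of 0] by simp
lemma LR_1: "1 \<in> laurent_ring t" using LR_of_int[of 1] by simp

lemma LR_uminus: "a \<in> laurent_ring t \<Longrightarrow> - a \<in> laurent_ring t"
  using LR_mult[OF LR_of_int[of "-1"]] by simp

lemma LR_diff: "a \<in> laurent_ring t \<Longrightarrow> b \<in> laurent_ring t \<Longrightarrow> a - b \<in> laurent_ring t"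
  using LR_add LR_uminus by (metis diff_conv_add_uminus)

lemma LR_sum: "(\<And>i. i \<in> I \<Longrightarrow> f i \<in> laurent_ring t) \<Longrightarrow> sum f I \<in> laurent_ring t"
  by (induction I rule: infinite_finite_induct) (auto simp: LR_0 LR_add)

lemma LR_comm: assumes "a \<in> laurent_ring t" shows "a * x = x * a"
proof -
  obtain K c where K: "finite K" "a = (\<Sum>k\<in>K. of_int (c k) * t powi k)" using assms LR_elim by blast
  show ?thesis unfolding K(2) sum_distrib_right sum_distrib_left
    by (intro sum.cong refl) (metis mult.assoc mult_of_int_commute tpow_comm)
qed

end

context
  fixes t :: "'f::division_ring" and p :: 'f
  assumes ct: "central_transcendental t" and pA: "p \<in> laurent_ring t"
begin

lemma pd_0: "A_dvd t p 0"
  unfolding A_dvd_def using LR_0[OF ct] by force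

lemma pd_add: "A_dvd t p x \<Longrightarrow> A_dvd t p y \<Longrightarrow> A_dvd t p (x + y)"
  unfolding A_dvd_def by (metis LR_add[OF ct] distrib_left)

lemma pd_uminus: "A_dvd t p x \<Longrightarrow> A_dvd t p (- x)"
  unfolding A_dvd_def by (metis LR_uminus[OF ct] mult_minus_right)

lemma pd_diff: "A_dvd t p x \<Longrightarrow> A_dvd t p y \<Longrightarrow> A_dvd t p (x - y)"
  by (metis diff_conv_add_uminus pd_add pd_uminus)

lemma pd_sum: "(\<And>i. i \<in> I \<Longrightarrow> A_dvd t p (f i)) \<Longrightarrow> A_dvd t p (sum f I)"
  by (induction I rule: infinite_finite_induct) (auto simp: pd_0 pd_add)

lemma pd_multR: "A_dvd t p x \<Longrightarrow> a \<in> laurent_ring t \<Longrightarrow> A_dvd t p (x * a)"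
  unfolding A_dvd_def by (metis LR_mult[OF ct] mult.assoc)

lemma pd_p: "e \<in> laurent_ring t \<Longrightarrow> A_dvd t p (p * e)"
  unfolding A_dvd_def by blast

lemma pd_tpow_cancel:
  assumes "A_dvd t p (c * t powi i)"
  shows "A_dvd t p c"
proof -
  have eq: "c = (c * t powi i) * t powi (-i)"
    using t_nz[OF ct] by (simp add: mult.assoc power_int_minus)
  have "A_dvd t p ((c * t powi i) * t powi (-i))"
    by (rule pd_multR[OF assms LR_tpow[OF ct]])
  then show ?thesis by (metis eq)
qed

end

inductive_set qset :: "'f::division_ring \<Rightarrow> 'f \<Rightarrow> 'f \<Rightarrow> 'f set" for t xa xb where
  q1: "1 \<in> qset t xa xb"
| qP: "q \<in> qset t xa xb \<Longrightarrow> (t powi i * xa + t powi j * xb) * q \<in> qset t xa xb"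

locale monsys =
  fixes t :: "'f::division_ring" and N :: nat and Mon :: "(nat \<Rightarrow> int) \<Rightarrow> 'f"
  assumes ct: "central_transcendental t"
    and mon0: "Mon 0 = 1"
    and monmult: "\<And>f g. f \<in> zvec N \<Longrightarrow> g \<in> zvec N \<Longrightarrow> \<exists>e. Mon f * Mon g = t powi e * Mon (f + g)"
    and indep: "\<And>S c. finite S \<Longrightarrow> S \<subseteq> zvec N \<Longrightarrow> (\<forall>f\<in>S. c f \<in> laurent_ring t) \<Longrightarrow>
         (\<Sum>f\<in>S. c f * Mon f) = 0 \<Longrightarrow> \<forall>f\<in>S. c f = 0"
begin

definition Lin :: "(nat \<Rightarrow> int) set \<Rightarrow> 'f set" where
  "Lin C0 = {x. \<exists>S c. finite S \<and> S \<subseteq> C0 \<and> (\<forall>f\<in>S. c f \<in> laurent_ring t) \<and> x = (\<Sum>f\<in>S. c f * Mon f)}"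

definition mexp :: "(nat \<Rightarrow> int) \<Rightarrow> (nat \<Rightarrow> int) \<Rightarrow> int" where
  "mexp f g = (SOME e. Mon f * Mon g = t powi e * Mon (f + g))"

lemma monmult': "f \<in> zvec N \<Longrightarrow> g \<in> zvec N \<Longrightarrow> Mon f * Mon g = t powi (mexp f g) * Mon (f + g)"
  unfolding mexp_def using monmult by (rule someI_ex)

lemma LinI: "finite S \<Longrightarrow> S \<subseteq> C0 \<Longrightarrow> (\<And>f. f \<in> S \<Longrightarrow> c f \<in> laurent_ring t) \<Longrightarrow> (\<Sum>f\<in>S. c f * Mon f) \<in> Lin C0"
  unfolding Lin_def by blast

lemma LinE:
  assumes "x \<in> Lin C0"
  obtains S c where "finite S" "S \<subseteq> C0" "\<And>f. f \<in> S \<Longrightarrow> c f \<in> laurent_ring t" "x = (\<Sum>f\<in>S. c f * Mon f)"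
  using assms unfolding Lin_def by blast

lemma regroup:
  assumes "finite I"
  shows "(\<Sum>i\<in>I. c i * Mon (h i)) = (\<Sum>g\<in>h ` I. (\<Sum>i\<in>{x \<in> I. h x = g}. c i) * Mon g)"
proof -
  have "(\<Sum>i\<in>I. c i * Mon (h i)) = (\<Sum>g\<in>h ` I. \<Sum>i\<in>{x \<in> I. h x = g}. c i * Mon (h i))"
    by (rule sum.image_gen[OF assms])
  also have "\<dots> = (\<Sum>g\<in>h ` I. (\<Sum>i\<in>{x \<in> I. h x = g}. c i) * Mon g)"
    by (intro sum.cong refl) (simp add: sum_distrib_right)
  finally show ?thesis .
qed

lemma Lin_gen:
  assumes "finite I" "h ` I \<subseteq> C0" "\<And>i. i \<in> I \<Longrightarrow> c i \<in> laurent_ring t"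
  shows "(\<Sum>i\<in>I. c i * Mon (h i)) \<in> Lin C0"
  unfolding regroup[OF assms(1)]
  by (rule LinI) (use assms in \<open>auto intro!: LR_sum[OF ct]\<close>)

lemma UQ:
  assumes I: "finite I" "h ` I \<subseteq> zvec N" "\<And>i. i \<in> I \<Longrightarrow> c i \<in> laurent_ring t"
    and J: "finite J" "h' ` J \<subseteq> zvec N" "\<And>j. j \<in> J \<Longrightarrow> d j \<in> laurent_ring t"
    and eq: "(\<Sum>i\<in>I. c i * Mon (h i)) = (\<Sum>j\<in>J. d j * Mon (h' j))"
  shows "(\<Sum>i\<in>{x \<in> I. h x = g}. c i) = (\<Sum>j\<in>{x \<in> J. h' x = g}. d j)"
proof -
  have em: "{x \<in> K. k x = gg} = {}" if "gg \<notin> k ` K" for K :: "'x set" and k :: "'x \<Rightarrow> nat \<Rightarrow> int" and gg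
    using that by auto
  define G where "G = h ` I \<union> h' ` J"
  define cc where "cc g = (\<Sum>i\<in>{x \<in> I. h x = g}. c i)" for g
  define dd where "dd g = (\<Sum>j\<in>{x \<in> J. h' x = g}. d j)" for g
  have fG: "finite G" using I J G_def by auto
  have cc0: "cc g = 0" if "g \<notin> h ` I" for g
    unfolding cc_def by (rule sum.neutral) (use that in auto)
  have dd0: "dd g = 0" if "g \<notin> h' ` J" for g
    unfolding dd_def by (rule sum.neutral) (use that in auto)
  have L: "(\<Sum>i\<in>I. c i * Mon (h i)) = (\<Sum>g\<in>G. cc g * Mon g)"
    unfolding regroup[OF I(1)] cc_def[symmetric]
    by (rule sum.mono_neutral_left) (use fG G_def cc0 in auto)
  have R: "(\<Sum>j\<in>J. d j * Mon (h' j)) = (\<Sum>g\<in>G. dd g * Mon g)"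
    unfolding regroup[OF J(1)] dd_def[symmetric]
    by (rule sum.mono_neutral_left) (use fG G_def dd0 in auto)
  have s0: "(\<Sum>g\<in>G. (cc g - dd g) * Mon g) = 0"
    using eq L R by (simp add: left_diff_distrib sum_subtractf)
  have mA: "\<forall>g\<in>G. cc g - dd g \<in> laurent_ring t"
    unfolding cc_def dd_def using I J by (auto intro!: LR_diff[OF ct] LR_sum[OF ct])
  have Gz: "G \<subseteq> zvec N" using I J G_def by auto
  have z: "\<forall>g\<in>G. cc g - dd g = 0"
    by (rule indep[OF fG Gz mA s0])
  show ?thesis
  proof (cases "g \<in> G")
    case True then show ?thesis using z cc_def dd_def by auto
  next
    case False
    then show ?thesis using cc0 dd0 G_def unfolding cc_def dd_def by auto
  qed
qed

lemma Lin_0: "0 \<in> Lin C0"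
  using LinI[of "{}" C0] by simp

lemma Lin_mon: "f \<in> C0 \<Longrightarrow> Mon f \<in> Lin C0"
  using LinI[of "{f}" C0 "\<lambda>_. 1"] LR_1[OF ct] by simp

lemma Lin_add:
  assumes "x \<in> Lin C0" "y \<in> Lin C0" shows "x + y \<in> Lin C0"
proof -
  obtain S c where S: "finite S" "S \<subseteq> C0" "\<And>f. f \<in> S \<Longrightarrow> c f \<in> laurent_ring t" "x = (\<Sum>f\<in>S. c f * Mon f)"
    using LinE[OF assms(1)] by blast
  obtain S' c' where S': "finite S'" "S' \<subseteq> C0" "\<And>f. f \<in> S' \<Longrightarrow> c' f \<in> laurent_ring t" "y = (\<Sum>f\<in>S'. c' f * Mon f)"
    using LinE[OF assms(2)] by blast
  have "x + y = (\<Sum>i\<in>S <+> S'. case_sum c c' i * Mon (case_sum id id i))"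
    using S S' by (simp add: sum.Plus comp_def)
  also have "\<dots> \<in> Lin C0"
    by (rule Lin_gen) (use S S' in auto)
  finally show ?thesis .
qed

lemma Lin_scal:
  assumes "a \<in> laurent_ring t" "x \<in> Lin C0" shows "a * x \<in> Lin C0"
proof -
  obtain S c where S: "finite S" "S \<subseteq> C0" "\<And>f. f \<in> S \<Longrightarrow> c f \<in> laurent_ring t" "x = (\<Sum>f\<in>S. c f * Mon f)"
    using LinE[OF assms(2)] by blast
  have "a * x = (\<Sum>f\<in>S. (a * c f) * Mon f)"
    using S by (simp add: sum_distrib_left mult.assoc)
  then show ?thesis using S assms(1) LR_mult[OF ct] by (auto intro!: LinI)
qed

lemma Lin_uminus: "x \<in> Lin C0 \<Longrightarrow> - x \<in> Lin C0"
  using Lin_scal[OF LR_of_int[OF ct, of "-1"]] by simp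

lemma Lin_diff: "x \<in> Lin C0 \<Longrightarrow> y \<in> Lin C0 \<Longrightarrow> x - y \<in> Lin C0"
  by (metis Lin_add Lin_uminus diff_conv_add_uminus)

lemma Lin_A: "0 \<in> C0 \<Longrightarrow> a \<in> laurent_ring t \<Longrightarrow> a \<in> Lin C0"
  using Lin_scal[OF _ Lin_mon, of a 0 C0] mon0 by simp

lemma Lin_mono: "C0 \<subseteq> C1 \<Longrightarrow> Lin C0 \<subseteq> Lin C1"
  unfolding Lin_def by blast

lemma Lin_sum: "(\<And>i. i \<in> I \<Longrightarrow> f i \<in> Lin C0) \<Longrightarrow> sum f I \<in> Lin C0"
  by (induction I rule: infinite_finite_induct) (auto simp: Lin_0 Lin_add)

lemma Lin_mult:
  assumes C: "C1 \<subseteq> zvec N" "C2 \<subseteq> zvec N" "\<And>f g. f \<in> C1 \<Longrightarrow> g \<in> C2 \<Longrightarrow> f + g \<in> C3"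
    and xy: "x \<in> Lin C1" "y \<in> Lin C2"
  shows "x * y \<in> Lin C3"
proof -
  obtain S c where S: "finite S" "S \<subseteq> C1" "\<And>f. f \<in> S \<Longrightarrow> c f \<in> laurent_ring t" "x = (\<Sum>f\<in>S. c f * Mon f)"
    using LinE[OF xy(1)] by blast
  obtain S' c' where S': "finite S'" "S' \<subseteq> C2" "\<And>f. f \<in> S' \<Longrightarrow> c' f \<in> laurent_ring t" "y = (\<Sum>f\<in>S'. c' f * Mon f)"
    using LinE[OF xy(2)] by blast
  have "x * y = (\<Sum>f\<in>S. \<Sum>g\<in>S'. (c f * Mon f) * (c' g * Mon g))"
    using S S' by (simp add: sum_product)
  also have "\<dots> = (\<Sum>f\<in>S. \<Sum>g\<in>S'. (c f * c' g * t powi (mexp f g)) * Mon (f + g))"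
  proof (intro sum.cong refl)
    fix f g assume fg: "f \<in> S" "g \<in> S'"
    have "(c f * Mon f) * (c' g * Mon g) = c f * (Mon f * c' g) * Mon g" by (simp add: mult.assoc)
    also have "Mon f * c' g = c' g * Mon f" using LR_comm[OF ct S'(3)[OF fg(2)]] by simp
    moreover have "f \<in> zvec N" "g \<in> zvec N" using fg S S' C by auto
    ultimately show "(c f * Mon f) * (c' g * Mon g) = (c f * c' g * t powi (mexp f g)) * Mon (f + g)"
      using monmult'[of f g] by (simp add: mult.assoc)
  qed
  also have "\<dots> = (\<Sum>z\<in>S \<times> S'. (case z of (f, g) \<Rightarrow> c f * c' g * t powi (mexp f g)) * Mon (case z of (f, g) \<Rightarrow> f + g))"
    by (simp add: sum.cartesian_product case_prod_beta)
  also have "\<dots> \<in> Lin C3"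
  proof (rule Lin_gen)
    show "(\<lambda>z. case z of (f, g) \<Rightarrow> f + g) ` (S \<times> S') \<subseteq> C3"
    proof
      fix z assume "z \<in> (\<lambda>z. case z of (f, g) \<Rightarrow> f + g) ` (S \<times> S')"
      then obtain f g where "f \<in> S" "g \<in> S'" "z = f + g" by auto
      then show "z \<in> C3" using S(2) S'(2) C(3) by auto
    qed
  qed (use S S' C in \<open>auto intro!: LR_mult[OF ct] LR_tpow[OF ct]\<close>)
  finally show ?thesis .
qed

end


lemma zvec_add: "f \<in> zvec N \<Longrightarrow> g \<in> zvec N \<Longrightarrow> f + g \<in> zvec N"
  unfolding zvec_def by auto
lemma zvec_uminus: "f \<in> zvec N \<Longrightarrow> - f \<in> zvec N"
  unfolding zvec_def by auto
lemma zvec_diff: "f \<in> zvec N \<Longrightarrow> g \<in> zvec N \<Longrightarrow> f - g \<in> zvec N"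
  unfolding zvec_def by auto
lemma zvec_0: "0 \<in> zvec N"
  unfolding zvec_def by auto
lemma zvec_unitv: "i \<in> {1..N} \<Longrightarrow> unitv i \<in> zvec N"
  unfolding zvec_def unitv_def by auto

context monsys
begin

lemma coeff_pdvd:
  assumes pA: "p \<in> laurent_ring t" and S: "finite S" "S \<subseteq> C0" "\<And>f. f \<in> S \<Longrightarrow> c f \<in> laurent_ring t"
    and dv: "\<And>f. f \<in> S \<Longrightarrow> A_dvd t p (c f)"
  shows "(\<Sum>f\<in>S. c f * Mon f) \<in> smul_set p (Lin C0)"
proof -
  have ex: "\<forall>f\<in>S. \<exists>e. e \<in> laurent_ring t \<and> c f = p * e" using dv unfolding A_dvd_def by blast
  from bchoice[OF ex] obtain e where e0: "\<forall>f\<in>S. e f \<in> laurent_ring t \<and> c f = p * e f" by blast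
  then have e: "\<And>f. f \<in> S \<Longrightarrow> e f \<in> laurent_ring t \<and> c f = p * e f" by blast
  have "(\<Sum>f\<in>S. c f * Mon f) = p * (\<Sum>f\<in>S. e f * Mon f)"
    by (simp add: sum_distrib_left mult.assoc e)
  moreover have "(\<Sum>f\<in>S. e f * Mon f) \<in> Lin C0" using S e by (intro LinI) auto
  ultimately show ?thesis unfolding smul_set_def by blast
qed

lemma pLin_coeff:
  assumes pA: "p \<in> laurent_ring t" and S: "finite S" "S \<subseteq> zvec N" "\<And>f. f \<in> S \<Longrightarrow> c f \<in> laurent_ring t"
    and x: "(\<Sum>f\<in>S. c f * Mon f) \<in> smul_set p (Lin (zvec N))" and f0: "f0 \<in> S"
  shows "A_dvd t p (c f0)"
proof -
  obtain w where w: "w \<in> Lin (zvec N)" "(\<Sum>f\<in>S. c f * Mon f) = p * w"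
    using x unfolding smul_set_def by blast
  obtain S' d where S': "finite S'" "S' \<subseteq> zvec N" "\<And>f. f \<in> S' \<Longrightarrow> d f \<in> laurent_ring t" "w = (\<Sum>f\<in>S'. d f * Mon f)"
    using LinE[OF w(1)] by blast
  have eq: "(\<Sum>f\<in>S. c f * Mon ((\<lambda>x. x) f)) = (\<Sum>g\<in>S'. (p * d g) * Mon ((\<lambda>x. x) g))"
    using w(2) S'(4) by (simp add: sum_distrib_left mult.assoc)
  have "(\<Sum>i\<in>{x \<in> S. x = f0}. c i) = (\<Sum>j\<in>{x \<in> S'. x = f0}. p * d j)"
    by (rule UQ[OF S(1) _ S(3) S'(1) _ _ eq]) (use S S' pA in \<open>auto intro: LR_mult[OF ct]\<close>)
  moreover have "{x \<in> S. x = f0} = {f0}" using f0 by auto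
  ultimately have "c f0 = p * (\<Sum>j\<in>{x \<in> S'. x = f0}. d j)" by (simp add: sum_distrib_left)
  moreover have "(\<Sum>j\<in>{x \<in> S'. x = f0}. d j) \<in> laurent_ring t" using S' by (auto intro!: LR_sum[OF ct])
  ultimately show ?thesis unfolding A_dvd_def by blast
qed

lemma pLin_restrict:
  assumes pA: "p \<in> laurent_ring t" and C0: "C0 \<subseteq> zvec N" and x: "x \<in> Lin C0" "x \<in> smul_set p (Lin (zvec N))"
  shows "x \<in> smul_set p (Lin C0)"
proof -
  obtain S c where S: "finite S" "S \<subseteq> C0" "\<And>f. f \<in> S \<Longrightarrow> c f \<in> laurent_ring t" "x = (\<Sum>f\<in>S. c f * Mon f)"
    using LinE[OF x(1)] by blast
  have Sz: "S \<subseteq> zvec N" using S(2) C0 by auto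
  have dv: "A_dvd t p (c f)" if "f \<in> S" for f
    using pLin_coeff[OF pA S(1) Sz S(3) _ that] x S(4) by simp
  show ?thesis unfolding S(4) by (rule coeff_pdvd[where c=c, OF pA S(1-3) dv])
qed

lemma core_dir:
  assumes pA: "p \<in> laurent_ring t" and ab: "a \<in> zvec N" "b \<in> zvec N" "a i0 > b i0"
    and shape: "\<And>f. f \<in> zvec N \<Longrightarrow> \<exists>\<alpha> \<beta>. Mon f * P = t powi \<alpha> * Mon (f + a) + t powi \<beta> * Mon (f + b)"
    and S: "finite S" "S \<subseteq> zvec N" "\<And>f. f \<in> S \<Longrightarrow> c f \<in> laurent_ring t"
    and xP: "(\<Sum>f\<in>S. c f * Mon f) * P \<in> smul_set p (Lin (zvec N))"
  shows "\<forall>f\<in>S. A_dvd t p (c f)"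
proof (rule ccontr)
  assume "\<not> (\<forall>f\<in>S. A_dvd t p (c f))"
  define Bad where "Bad = {f \<in> S. \<not> A_dvd t p (c f)}"
  have Bne: "Bad \<noteq> {}" and fB: "finite Bad" using \<open>\<not> _\<close> S(1) Bad_def by auto
  define m where "m = Max ((\<lambda>f. f i0) ` Bad)"
  have "m \<in> (\<lambda>f. f i0) ` Bad" unfolding m_def using fB Bne by (intro Max_in) auto
  then obtain f1 where f1: "f1 \<in> Bad" "f1 i0 = m" by auto
  have mx: "f i0 \<le> m" if "f \<in> Bad" for f
    unfolding m_def by (rule Max_ge) (use fB that in auto)
  have ex: "\<forall>f\<in>S. \<exists>ab. Mon f * P = t powi (fst ab) * Mon (f + a) + t powi (snd ab) * Mon (f + b)"
  proof
    fix f assume "f \<in> S"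
    then obtain \<alpha> \<beta> where "Mon f * P = t powi \<alpha> * Mon (f + a) + t powi \<beta> * Mon (f + b)"
      using shape S(2) by blast
    then show "\<exists>ab. Mon f * P = t powi (fst ab) * Mon (f + a) + t powi (snd ab) * Mon (f + b)"
      by (intro exI[of _ "(\<alpha>, \<beta>)"]) simp
  qed
  from bchoice[OF ex] obtain ab where abf0: "\<forall>f\<in>S. Mon f * P = t powi (fst (ab f)) * Mon (f + a) + t powi (snd (ab f)) * Mon (f + b)"
    by blast
  have abf: "\<And>f. f \<in> S \<Longrightarrow> Mon f * P = t powi (fst (ab f)) * Mon (f + a) + t powi (snd (ab f)) * Mon (f + b)"
    using abf0 by blast
  define h where "h z = (if snd z then fst z + a else fst z + b)" for z :: "(nat \<Rightarrow> int) \<times> bool"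
  define cc where "cc z = (if snd z then c (fst z) * t powi (fst (ab (fst z))) else c (fst z) * t powi (snd (ab (fst z))))"
    for z :: "(nat \<Rightarrow> int) \<times> bool"
  have e1: "(\<Sum>f\<in>S. c f * Mon f) * P = (\<Sum>z\<in>S \<times> UNIV. cc z * Mon (h z))"
  proof -
    have "(\<Sum>f\<in>S. c f * Mon f) * P = (\<Sum>f\<in>S. c f * (Mon f * P))"
      by (simp add: sum_distrib_right mult.assoc)
    also have "\<dots> = (\<Sum>f\<in>S. \<Sum>e\<in>UNIV. cc (f, e) * Mon (h (f, e)))"
      by (intro sum.cong refl) (simp add: abf UNIV_bool cc_def h_def distrib_left mult.assoc add.commute)
    also have "\<dots> = (\<Sum>z\<in>S \<times> UNIV. cc z * Mon (h z))"
      by (simp add: sum.cartesian_product case_prod_beta)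
    finally show ?thesis .
  qed
  obtain w where w: "w \<in> Lin (zvec N)" "(\<Sum>f\<in>S. c f * Mon f) * P = p * w"
    using xP unfolding smul_set_def by blast
  obtain S' d where S': "finite S'" "S' \<subseteq> zvec N" "\<And>f. f \<in> S' \<Longrightarrow> d f \<in> laurent_ring t" "w = (\<Sum>f\<in>S'. d f * Mon f)"
    using LinE[OF w(1)] by blast
  have eq: "(\<Sum>z\<in>S \<times> UNIV. cc z * Mon (h z)) = (\<Sum>g\<in>S'. (p * d g) * Mon ((\<lambda>x. x) g))"
    using w(2) S'(4) e1 by (simp add: sum_distrib_left mult.assoc)
  define g0 where "g0 = f1 + a"
  define Z where "Z = {z \<in> S \<times> UNIV. h z = g0}"
  have "(\<Sum>z\<in>Z. cc z) = (\<Sum>j\<in>{x \<in> S'. x = g0}. p * d j)"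
    unfolding Z_def
  proof (rule UQ[OF _ _ _ S'(1) _ _ eq])
    show "finite (S \<times> (UNIV :: bool set))" using S(1) by simp
    show "h ` (S \<times> UNIV) \<subseteq> zvec N" using S(2) ab by (auto simp: h_def intro!: zvec_add)
    show "cc i \<in> laurent_ring t" if "i \<in> S \<times> UNIV" for i
      using that S(3) by (auto simp: cc_def intro!: LR_mult[OF ct] LR_tpow[OF ct])
    show "(\<lambda>x. x) ` S' \<subseteq> zvec N" using S' by auto
    show "p * d j \<in> laurent_ring t" if "j \<in> S'" for j using that S' pA LR_mult[OF ct] by auto
  qed
  moreover have "A_dvd t p (\<Sum>j\<in>{x \<in> S'. x = g0}. p * d j)"
  proof (rule pd_sum[OF ct pA])
    fix j assume "j \<in> {x \<in> S'. x = g0}"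
    then have "d j \<in> laurent_ring t" using S'(3) by blast
    then show "A_dvd t p (p * d j)" by (rule pd_p[OF ct pA])
  qed
  ultimately have dvZ: "A_dvd t p (\<Sum>z\<in>Z. cc z)" by simp
  have f1Z: "(f1, True) \<in> Z" using f1 Bad_def by (auto simp: Z_def h_def g0_def)
  have fZ: "finite Z" using S(1) unfolding Z_def by (auto intro: finite_subset[of _ "S \<times> UNIV"])
  have rest: "A_dvd t p (cc z)" if "z \<in> Z - {(f1, True)}" for z
  proof -
    obtain f e where z: "z = (f, e)" by (cases z)
    have fS: "f \<in> S" and hz: "h (f, e) = f1 + a" using that z by (auto simp: Z_def g0_def)
    show ?thesis
    proof (cases e)
      case True
      then have "f = f1" using hz by (simp add: h_def)
      then show ?thesis using that z True by simp
    next
      case False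
      then have "f + b = f1 + a" using hz by (simp add: h_def)
      then have "(f + b) i0 = (f1 + a) i0" by simp
      then have "f i0 + b i0 = f1 i0 + a i0" by simp
      then have "f i0 > m" using f1(2) ab(3) by linarith
      then have "f \<notin> Bad" using mx by force
      then have "A_dvd t p (c f)" using fS Bad_def by auto
      then show ?thesis using z False by (simp add: cc_def pd_multR[OF ct pA _ LR_tpow[OF ct]])
    qed
  qed
  have "(\<Sum>z\<in>Z. cc z) = cc (f1, True) + (\<Sum>z\<in>Z - {(f1, True)}. cc z)"
    by (rule sum.remove[OF fZ f1Z])
  then have "cc (f1, True) = (\<Sum>z\<in>Z. cc z) - (\<Sum>z\<in>Z - {(f1, True)}. cc z)" by simp
  moreover have "A_dvd t p ((\<Sum>z\<in>Z. cc z) - (\<Sum>z\<in>Z - {(f1, True)}. cc z))"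
    by (rule pd_diff[OF ct pA dvZ pd_sum[OF ct pA rest]])
  ultimately have "A_dvd t p (cc (f1, True))" by simp
  then have "A_dvd t p (c f1)"
    by (simp add: cc_def pd_tpow_cancel[OF ct pA])
  then show False using f1 Bad_def by auto
qed

lemma core:
  assumes pA: "p \<in> laurent_ring t" and ab: "a \<in> zvec N" "b \<in> zvec N" "a \<noteq> b"
    and shape: "\<And>f. f \<in> zvec N \<Longrightarrow> \<exists>\<alpha> \<beta>. Mon f * P = t powi \<alpha> * Mon (f + a) + t powi \<beta> * Mon (f + b)"
    and S: "finite S" "S \<subseteq> zvec N" "\<And>f. f \<in> S \<Longrightarrow> c f \<in> laurent_ring t"
    and xP: "(\<Sum>f\<in>S. c f * Mon f) * P \<in> smul_set p (Lin (zvec N))"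
  shows "\<forall>f\<in>S. A_dvd t p (c f)"
proof -
  obtain i0 where "a i0 \<noteq> b i0" using ab(3) by (auto simp: fun_eq_iff)
  then consider "a i0 > b i0" | "b i0 > a i0" by linarith
  then show ?thesis
  proof cases
    case 1 then show ?thesis using core_dir[OF pA ab(1,2) 1 shape S xP] by blast
  next
    case 2
    have shape': "\<exists>\<alpha> \<beta>. Mon f * P = t powi \<alpha> * Mon (f + b) + t powi \<beta> * Mon (f + a)" if fz: "f \<in> zvec N" for f
    proof -
      obtain \<alpha> \<beta> where eq: "Mon f * P = t powi \<alpha> * Mon (f + a) + t powi \<beta> * Mon (f + b)"
        using shape[OF fz] by blast
      have "Mon f * P = t powi \<beta> * Mon (f + b) + t powi \<alpha> * Mon (f + a)"
        unfolding eq by (rule add.commute)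
      then show ?thesis by blast
    qed
    show ?thesis using core_dir[OF pA ab(2,1) 2 shape' S xP] by blast
  qed
qed

lemma ModP_prod:
  assumes pA: "p \<in> laurent_ring t" and ab: "a \<in> zvec N" "b \<in> zvec N" "a \<noteq> b"
    and q: "q \<in> qset t (Mon a) (Mon b)"
  shows "C0 \<subseteq> zvec N \<Longrightarrow> x \<in> Lin C0 \<Longrightarrow> x * q \<in> smul_set p (Lin (zvec N)) \<Longrightarrow> x \<in> smul_set p (Lin C0)"
  using q
proof (induction arbitrary: x C0)
  case q1
  then show ?case using pLin_restrict[OF pA] by simp
next
  case (qP q i j)
  define P where "P = t powi i * Mon a + t powi j * Mon b"
  have PL: "P \<in> Lin (zvec N)" unfolding P_def
    by (intro Lin_add Lin_scal LR_tpow[OF ct] Lin_mon ab)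
  have xPL: "x * P \<in> Lin (zvec N)"
    by (rule Lin_mult[OF qP.prems(1) subset_refl _ qP.prems(2) PL]) (use qP.prems(1) in \<open>auto intro: zvec_add\<close>)
  have "x * P * q \<in> smul_set p (Lin (zvec N))" using qP.prems(3) by (simp add: P_def mult.assoc)
  then have xP: "x * P \<in> smul_set p (Lin (zvec N))"
    using qP.IH[OF subset_refl xPL] by simp
  obtain S c where S: "finite S" "S \<subseteq> C0" "\<And>f. f \<in> S \<Longrightarrow> c f \<in> laurent_ring t" "x = (\<Sum>f\<in>S. c f * Mon f)"
    using LinE[OF qP.prems(2)] by blast
  have shape: "\<exists>\<alpha> \<beta>. Mon f * P = t powi \<alpha> * Mon (f + a) + t powi \<beta> * Mon (f + b)" if "f \<in> zvec N" for f
  proof (intro exI)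
    have c1: "Mon f * (t powi i * Mon a) = t powi i * (Mon f * Mon a)"
      by (metis mult.assoc tpow_comm[OF ct])
    have c2: "Mon f * (t powi j * Mon b) = t powi j * (Mon f * Mon b)"
      by (metis mult.assoc tpow_comm[OF ct])
    have "Mon f * P = t powi i * (Mon f * Mon a) + t powi j * (Mon f * Mon b)"
      unfolding P_def distrib_left c1 c2 ..
    also have "\<dots> = t powi (i + mexp f a) * Mon (f + a) + t powi (j + mexp f b) * Mon (f + b)"
      using monmult'[OF that ab(1)] monmult'[OF that ab(2)] by (simp add: tpow_add[OF ct] mult.assoc)
    finally show "Mon f * P = t powi (i + mexp f a) * Mon (f + a) + t powi (j + mexp f b) * Mon (f + b)" .
  qed
  have Sz: "S \<subseteq> zvec N" using S(2) qP.prems(1) by auto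
  have xP': "(\<Sum>f\<in>S. c f * Mon f) * P \<in> smul_set p (Lin (zvec N))" using xP S(4) by simp
  have "\<forall>f\<in>S. A_dvd t p (c f)"
    by (rule core[OF pA ab shape S(1) Sz S(3) xP'])
  then have dv: "\<And>f. f \<in> S \<Longrightarrow> A_dvd t p (c f)" by blast
  show ?case unfolding S(4) by (rule coeff_pdvd[OF pA S(1) S(2) S(3) dv])
qed

lemma DISJ:
  assumes J: "finite J" and D: "\<And>j. j \<in> J \<Longrightarrow> D j \<subseteq> zvec N"
    and dis: "\<And>j j'. j \<in> J \<Longrightarrow> j' \<in> J \<Longrightarrow> j \<noteq> j' \<Longrightarrow> D j \<inter> D j' = {}"
    and x: "\<And>j. j \<in> J \<Longrightarrow> x j \<in> Lin (D j)" and s: "(\<Sum>j\<in>J. x j) = 0" and j0: "j0 \<in> J"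
  shows "x j0 = 0"
proof -
  have ex: "\<forall>j\<in>J. \<exists>Sc. finite (fst Sc) \<and> fst Sc \<subseteq> D j \<and> (\<forall>f\<in>fst Sc. snd Sc f \<in> laurent_ring t) \<and>
      x j = (\<Sum>f\<in>fst Sc. snd Sc f * Mon f)"
  proof
    fix j assume jJ: "j \<in> J"
    obtain S c where "finite S" "S \<subseteq> D j" "\<And>f. f \<in> S \<Longrightarrow> c f \<in> laurent_ring t" "x j = (\<Sum>f\<in>S. c f * Mon f)"
      using LinE[OF x[OF jJ]] by blast
    then show "\<exists>Sc. finite (fst Sc) \<and> fst Sc \<subseteq> D j \<and> (\<forall>f\<in>fst Sc. snd Sc f \<in> laurent_ring t) \<and>
      x j = (\<Sum>f\<in>fst Sc. snd Sc f * Mon f)" by (intro exI[of _ "(S, c)"]) auto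
  qed
  from bchoice[OF ex] obtain R where R0: "\<forall>j\<in>J. finite (fst (R j)) \<and> fst (R j) \<subseteq> D j \<and> (\<forall>f\<in>fst (R j). snd (R j) f \<in> laurent_ring t) \<and>
      x j = (\<Sum>f\<in>fst (R j). snd (R j) f * Mon f)" by blast
  have R: "\<And>j. j \<in> J \<Longrightarrow> finite (fst (R j)) \<and> fst (R j) \<subseteq> D j \<and> (\<forall>f\<in>fst (R j). snd (R j) f \<in> laurent_ring t) \<and>
      x j = (\<Sum>f\<in>fst (R j). snd (R j) f * Mon f)" using R0 by blast
  define S where "S j = fst (R j)" for j
  define c where "c j = snd (R j)" for j
  have fSig: "finite (Sigma J S)" using J R S_def by auto
  have "(\<Sum>j\<in>J. x j) = (\<Sum>j\<in>J. \<Sum>f\<in>S j. c j f * Mon f)"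
    using R S_def c_def by (intro sum.cong) auto
  also have "\<dots> = (\<Sum>z\<in>Sigma J S. c (fst z) (snd z) * Mon (snd z))"
    by (subst sum.Sigma) (use J R S_def in \<open>auto simp: case_prod_beta\<close>)
  finally have eq: "(\<Sum>z\<in>Sigma J S. c (fst z) (snd z) * Mon (snd z)) = (\<Sum>z\<in>({}::nat set). 0 * Mon ((\<lambda>x. 0) z))"
    using s by simp
  have c0: "c j0 g = 0" if g: "g \<in> S j0" for g
  proof -
    have "(\<Sum>z\<in>{z \<in> Sigma J S. snd z = g}. c (fst z) (snd z)) = (\<Sum>z\<in>{z \<in> ({}::nat set). (\<lambda>x. 0) z = g}. 0)"
    proof (rule UQ[OF fSig _ _ _ _ _ eq])
      show "snd ` Sigma J S \<subseteq> zvec N" using R D S_def by fastforce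
      show "c (fst z) (snd z) \<in> laurent_ring t" if "z \<in> Sigma J S" for z using that R S_def c_def by auto
    qed auto
    moreover have "{z \<in> Sigma J S. snd z = g} = {(j0, g)}"
    proof
      show "{z \<in> Sigma J S. snd z = g} \<subseteq> {(j0, g)}"
      proof
        fix z assume z: "z \<in> {z \<in> Sigma J S. snd z = g}"
        then obtain j where j: "j \<in> J" "z = (j, g)" "g \<in> S j" by auto
        have "g \<in> D j" "g \<in> D j0" using j g j0 R S_def by auto
        then have "j = j0" using dis[OF j(1) j0] by auto
        then show "z \<in> {(j0, g)}" using j by auto
      qed
      show "{(j0, g)} \<subseteq> {z \<in> Sigma J S. snd z = g}" using j0 g by auto
    qed
    ultimately show ?thesis by simp
  qed
  have "x j0 = (\<Sum>f\<in>S j0. c j0 f * Mon f)" using R[OF j0] S_def c_def by auto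
  also have "\<dots> = 0" using c0 by simp
  finally show ?thesis .
qed

lemma indep_inj:
  assumes S: "finite S" "h ` S \<subseteq> zvec N" "inj_on h S" "\<And>f. f \<in> S \<Longrightarrow> c f \<in> laurent_ring t"
    and z: "(\<Sum>f\<in>S. c f * Mon (h f)) = 0" and f0: "f0 \<in> S"
  shows "c f0 = 0"
proof -
  have eq: "(\<Sum>f\<in>S. c f * Mon (h f)) = (\<Sum>z\<in>({}::nat set). 0 * Mon ((\<lambda>x. 0) z))" using z by simp
  have "(\<Sum>i\<in>{x \<in> S. h x = h f0}. c i) = (\<Sum>z\<in>{z \<in> ({}::nat set). (\<lambda>x. 0) z = h f0}. 0)"
    by (rule UQ[OF S(1,2) S(4) _ _ _ eq]) auto
  moreover have "{x \<in> S. h x = h f0} = {f0}" using S(3) f0 by (auto dest: inj_onD)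
  ultimately show ?thesis by simp
qed

end


lemma bl_add1: "bilin N L (f + g) h = bilin N L f h + bilin N L g h"
  unfolding bilin_def by (simp add: algebra_simps sum.distrib)
lemma bl_add2: "bilin N L f (g + h) = bilin N L f g + bilin N L f h"
  unfolding bilin_def by (simp add: algebra_simps sum.distrib)
lemma bl_neg1: "bilin N L (- f) g = - bilin N L f g"
  unfolding bilin_def by (simp add: sum_negf)
lemma bl_neg2: "bilin N L f (- g) = - bilin N L f g"
  unfolding bilin_def by (simp add: sum_negf)
lemma bl_diff1: "bilin N L (f - g) h = bilin N L f h - bilin N L g h"
  using bl_add1[of N L f "- g" h] bl_neg1[of N L g h] by simp
lemma bl_smul1: "bilin N L (\<lambda>i. c * f i) g = c * bilin N L f g"
  unfolding bilin_def by (simp add: sum_distrib_left algebra_simps)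
lemma bl_0: "bilin N L 0 g = 0"
  unfolding bilin_def by simp

lemma bl_skew:
  assumes "skew_sym N L"
  shows "bilin N L f g = - bilin N L g f"
proof -
  have "bilin N L g f = (\<Sum>j\<in>{1..N}. \<Sum>i\<in>{1..N}. g j * L j i * f i)" unfolding bilin_def by simp
  also have "\<dots> = (\<Sum>i\<in>{1..N}. \<Sum>j\<in>{1..N}. g j * L j i * f i)" by (rule sum.swap)
  also have "\<dots> = (\<Sum>i\<in>{1..N}. \<Sum>j\<in>{1..N}. - (f i * L i j * g j))"
  proof (intro sum.cong refl)
    fix i j assume ij: "i \<in> {1..N}" "j \<in> {1..N}"
    then have "L j i = - L i j" using assms unfolding skew_sym_def by blast
    then show "g j * L j i * f i = - (f i * L i j * g j)" by (simp add: algebra_simps)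
  qed
  also have "\<dots> = - bilin N L f g" unfolding bilin_def by (simp add: sum_negf)
  finally show ?thesis by simp
qed

lemma bl_self: "skew_sym N L \<Longrightarrow> bilin N L f f = 0"
  using bl_skew[of N L f f] by simp

lemma bl_unit2:
  assumes "j \<in> {1..N}"
  shows "bilin N L f (unitv j) = (\<Sum>i\<in>{1..N}. f i * L i j)"
proof -
  have "bilin N L f (unitv j) = (\<Sum>i\<in>{1..N}. \<Sum>j'\<in>{1..N}. if j' = j then f i * L i j else 0)"
    unfolding bilin_def unitv_def by (intro sum.cong refl) auto
  also have "\<dots> = (\<Sum>i\<in>{1..N}. f i * L i j)"
    using assms by (simp add: sum.delta)
  finally show ?thesis .
qed

lemma bl_expand2: "bilin N L f g = (\<Sum>j\<in>{1..N}. bilin N L f (unitv j) * g j)"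
proof -
  have "bilin N L f g = (\<Sum>j\<in>{1..N}. \<Sum>i\<in>{1..N}. f i * L i j * g j)"
    unfolding bilin_def by (rule sum.swap)
  also have "\<dots> = (\<Sum>j\<in>{1..N}. bilin N L f (unitv j) * g j)"
    by (intro sum.cong refl) (simp add: bl_unit2 sum_distrib_right)
  finally show ?thesis .
qed

lemma tpow_mult_eq:
  fixes t :: "'f::division_ring"
  assumes "central_transcendental t" "x * y = t powi e * z"
  shows "z = t powi (- e) * x * y"
proof -
  have "t powi (- e) * (x * y) = t powi (- e) * t powi e * z" using assms(2) by (simp add: mult.assoc)
  also have "t powi (- e) * t powi e = 1"
    using tpow_add[OF assms(1), of "-e" e, symmetric] by simp
  finally show ?thesis by (simp add: mult.assoc)
qed

lemma Tge_0: "central_transcendental t \<Longrightarrow> 0 \<in> Tge t N ex iv g"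
  using Tge.scalar LR_0 by blast
lemma Tge_1: "central_transcendental t \<Longrightarrow> 1 \<in> Tge t N ex iv g"
  using Tge.scalar LR_1 by blast
lemma Tge_pow: "x \<in> Tge t N ex iv g \<Longrightarrow> central_transcendental t \<Longrightarrow> x ^ n \<in> Tge t N ex iv g"
  by (induction n) (auto intro: Tge_1 Tge.mult)
lemma Tge_sum: "central_transcendental t \<Longrightarrow> (\<And>i. i \<in> I \<Longrightarrow> f i \<in> Tge t N ex iv g) \<Longrightarrow> sum f I \<in> Tge t N ex iv g"
  by (induction I rule: infinite_finite_induct) (auto intro: Tge_0 Tge.add)

locale seed =
  fixes t :: "'f::division_ring" and N :: nat and ex inv :: "nat set"
    and M :: "(nat \<Rightarrow> int) \<Rightarrow> 'f" and B :: "nat \<Rightarrow> nat \<Rightarrow> int" and k :: nat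
    and L :: "nat \<Rightarrow> nat \<Rightarrow> int" and d :: "nat \<Rightarrow> int"
  assumes ct: "central_transcendental t"
    and exN: "ex \<subseteq> {1..N}" and invN: "inv \<subseteq> {1..N} - ex"
    and tf: "toric_frame t N M L"
    and dpos: "\<forall>j\<in>ex. d j > 0"
    and cmp: "\<forall>i\<in>{1..N}. \<forall>j\<in>ex. (\<Sum>l\<in>{1..N}. B l j * L l i) = (if i = j then d j else 0)"
    and kex: "k \<in> ex"
begin

lemma tf_all: "skew_sym N L \<and> M 0 = 1 \<and>
     (\<forall>f\<in>zvec N. \<forall>g\<in>zvec N. M f * M g = t powi (bilin N L f g) * M (f + g)) \<and>
     (\<forall>S c. finite S \<longrightarrow> S \<subseteq> zvec N \<longrightarrow> (\<forall>f\<in>S. c f \<in> laurent_ring t) \<longrightarrow>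
         (\<Sum>f\<in>S. c f * M f) = 0 \<longrightarrow> (\<forall>f\<in>S. c f = 0)) \<and>
     (\<forall>D. sub_division_ring D \<longrightarrow> t \<in> D \<longrightarrow> M ` zvec N \<subseteq> D \<longrightarrow> D = UNIV)"
  using tf unfolding toric_frame_def .
lemma skew: "skew_sym N L" using tf_all by (rule conjunct1)
lemma X0: "M 0 = 1" using tf_all[THEN conjunct2] by (rule conjunct1)
lemma XX: "f \<in> zvec N \<Longrightarrow> g \<in> zvec N \<Longrightarrow> M f * M g = t powi (bilin N L f g) * M (f + g)"
  using tf_all[THEN conjunct2, THEN conjunct2, THEN conjunct1] by blast
lemma indepX: "finite S \<Longrightarrow> S \<subseteq> zvec N \<Longrightarrow> (\<forall>f\<in>S. c f \<in> laurent_ring t) \<Longrightarrow>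
         (\<Sum>f\<in>S. c f * M f) = 0 \<Longrightarrow> \<forall>f\<in>S. c f = 0"
  using tf_all[THEN conjunct2, THEN conjunct2, THEN conjunct2, THEN conjunct1] by blast

sublocale X: monsys t N M
proof
  show "central_transcendental t" by (rule ct)
  show "M 0 = 1" by (rule X0)
  show "\<exists>e. M f * M g = t powi e * M (f + g)" if "f \<in> zvec N" "g \<in> zvec N" for f g
    by (intro exI) (rule XX[OF that])
  show "\<forall>f\<in>S. c f = 0" if "finite S" "S \<subseteq> zvec N" "\<forall>f\<in>S. c f \<in> laurent_ring t" "(\<Sum>f\<in>S. c f * M f) = 0" for S c
    by (rule indepX[OF that])
qed

lemma kN: "k \<in> {1..N}" using kex exN by auto

lemma X_nz: "f \<in> zvec N \<Longrightarrow> M f \<noteq> 0"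
  using indepX[of "{f}" "\<lambda>_. 1"] LR_1[OF ct] by auto

lemma X_inv: assumes "v \<in> zvec N" shows "inverse (M v) = M (- v)"
proof -
  have "M v * M (- v) = 1"
    using XX[OF assms zvec_uminus[OF assms]] bl_neg2[of N L v v] bl_self[OF skew] X0 by simp
  then show ?thesis by (rule inverse_unique)
qed

lemma comm_X:
  assumes "f \<in> zvec N" "g \<in> zvec N"
  shows "M f * M g = t powi (bilin N L f g - bilin N L g f) * (M g * M f)"
proof -
  have "t powi (bilin N L f g - bilin N L g f) * (M g * M f)
      = t powi (bilin N L f g - bilin N L g f) * t powi (bilin N L g f) * M (f + g)"
    using XX[OF assms(2,1)] by (simp add: mult.assoc add.commute)
  also have "\<dots> = t powi (bilin N L f g) * M (f + g)"
    by (simp flip: tpow_add[OF ct])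
  finally show ?thesis using XX[OF assms] by simp
qed

lemma X_pow: assumes "v \<in> zvec N" shows "M (\<lambda>i. int n * v i) = M v ^ n"
proof (induction n)
  case 0 then show ?case using X0 by (simp add: zero_fun_def)
next
  case (Suc n)
  have vz: "(\<lambda>i. int n * v i) \<in> zvec N" using assms unfolding zvec_def by auto
  have "M (\<lambda>i. int n * v i) * M v = t powi (bilin N L (\<lambda>i. int n * v i) v) * M ((\<lambda>i. int n * v i) + v)"
    by (rule XX[OF vz assms])
  moreover have "bilin N L (\<lambda>i. int n * v i) v = 0" using bl_smul1 bl_self[OF skew] by simp
  moreover have "(\<lambda>i. int n * v i) + v = (\<lambda>i. int (Suc n) * v i)" by (auto simp: algebra_simps)
  ultimately have e: "M (\<lambda>i. int n * v i) * M v = M (\<lambda>i. int (Suc n) * v i)" by simp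
  have "M v ^ Suc n = M v ^ n * M v" by (rule power_Suc2)
  also have "\<dots> = M (\<lambda>i. int n * v i) * M v" using Suc by simp
  also have "\<dots> = M (\<lambda>i. int (Suc n) * v i)" by (rule e)
  finally show ?case by (rule sym)
qed

end


lemma pow_comm_scalar:
  fixes u w s :: "'f::division_ring"
  assumes sc: "\<And>x. s * x = x * s" and uw: "u * w = s * (w * u)"
  shows "u ^ n * w = s ^ n * (w * u ^ n)"
proof (induction n)
  case 0 then show ?case by simp
next
  case (Suc n)
  have scn: "s ^ n * x = x * s ^ n" for x
    by (induction n) (simp_all, metis mult.assoc sc)
  have "u ^ Suc n * w = u * (u ^ n * w)" by (simp add: mult.assoc)
  also have "\<dots> = u * (s ^ n * (w * u ^ n))" using Suc by simp
  also have "\<dots> = s ^ n * ((u * w) * u ^ n)" by (metis mult.assoc scn)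
  also have "\<dots> = s ^ n * (s * (w * u) * u ^ n)" using uw by simp
  also have "\<dots> = (s ^ n * s) * (w * (u * u ^ n))" by (simp add: mult.assoc)
  also have "\<dots> = s ^ Suc n * (w * u ^ Suc n)" by (simp add: power_commutes)
  finally show ?case .
qed

lemma inv_comm_scalar:
  fixes u w s :: "'f::division_ring"
  assumes sc: "\<And>x. s * x = x * s" and nz: "u \<noteq> 0" "s \<noteq> 0" and uw: "u * w = s * (w * u)"
  shows "inverse u * w = inverse s * (w * inverse u)"
proof -
  have l: "inverse u * (u * w) * inverse u = w * inverse u"
    using nz by (simp add: mult.assoc[symmetric])
  have su: "inverse u * s = s * inverse u" using sc by simp
  have "inverse u * (s * (w * u)) * inverse u = (inverse u * s) * w * (u * inverse u)"
    by (simp add: mult.assoc)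
  also have "\<dots> = s * (inverse u * w)" using nz su by (simp add: mult.assoc)
  finally have r: "inverse u * (s * (w * u)) * inverse u = s * (inverse u * w)" .
  have "w * inverse u = s * (inverse u * w)"
    using l r uw by simp
  then have "inverse s * (w * inverse u) = inverse u * w"
    using nz by (simp add: mult.assoc[symmetric])
  then show ?thesis by simp
qed

lemma powi_comm_scalar:
  fixes u w s :: "'f::division_ring"
  assumes sc: "\<And>x. s * x = x * s" and nz: "u \<noteq> 0" "s \<noteq> 0" and uw: "u * w = s * (w * u)"
  shows "u powi n * w = s powi n * (w * u powi n)"
proof (cases "n \<ge> 0")
  case True
  then show ?thesis using pow_comm_scalar[OF sc uw] by (simp add: power_int_def)
next
  case False
  have sc': "inverse s * x = x * inverse s" for x
    by (rule mult_commute_imp_mult_inverse_commute) (simp add: sc)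
  have "inverse u ^ m * w = inverse s ^ m * (w * inverse u ^ m)" for m
    by (rule pow_comm_scalar[OF sc' inv_comm_scalar[OF sc nz uw]])
  then show ?thesis using False by (simp add: power_int_def)
qed

context seed
begin

definition "bk = (\<lambda>i. if i \<in> {1..N} then B i k else 0)"
definition "va = bpos N B k"
definition "vb = - bneg N B k"
definition "Zk = M (- unitv k)"
definition "Yk = mut_basis N M B k k"
definition "i0 = - bilin N L (- unitv k) va"
definition "j0 = - bilin N L (- unitv k) vb"
definition "Pk = t powi i0 * M va + t powi j0 * M vb"
definition "Cc = {f \<in> zvec N. \<forall>i\<in>{1..N} - (ex \<union> inv). f i \<ge> 0}"

lemma bk_lam_unit: "i \<in> {1..N} \<Longrightarrow> bilin N L bk (unitv i) = (if i = k then d k else 0)"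
proof -
  assume i: "i \<in> {1..N}"
  have "bilin N L bk (unitv i) = (\<Sum>l\<in>{1..N}. B l k * L l i)"
    unfolding bl_unit2[OF i] bk_def by (intro sum.cong refl) auto
  also have "\<dots> = (if i = k then d k else 0)" using cmp i kex by auto
  finally show ?thesis .
qed

lemma bk_gen: "bilin N L bk g = d k * g k"
proof -
  have "bilin N L bk g = (\<Sum>j\<in>{1..N}. (if j = k then d k else 0) * g j)"
    unfolding bl_expand2[of N L bk g] by (intro sum.cong refl) (simp add: bk_lam_unit)
  also have "\<dots> = (\<Sum>j\<in>{1..N}. if j = k then d k * g k else 0)" by (intro sum.cong refl) auto
  also have "\<dots> = d k * g k" using kN by (simp add: sum.delta')
  finally show ?thesis .
qed

lemma Bkk: "B k k = 0"
proof -
  have "0 = bilin N L bk bk" using bl_self[OF skew] by simp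
  also have "\<dots> = d k * B k k" using bk_gen kN by (simp add: bk_def)
  finally show ?thesis using dpos kex by auto
qed

lemma va_vb: "va = vb + bk"
  by (rule ext) (simp add: va_def vb_def bk_def bpos_def bneg_def max_def min_def)

lemma va_z: "va \<in> zvec N" unfolding va_def bpos_def zvec_def by auto
lemma vb_z: "vb \<in> zvec N" unfolding vb_def bneg_def zvec_def by auto
lemma va_k: "va k = 0" unfolding va_def bpos_def using Bkk by simp
lemma vb_k: "vb k = 0" unfolding vb_def bneg_def using Bkk by simp
lemma va_nn: "va i \<ge> 0" unfolding va_def bpos_def by simp
lemma vb_nn: "vb i \<ge> 0" unfolding vb_def bneg_def by simp

lemma va_ne: "va \<noteq> vb"
proof
  assume "va = vb"
  then have "bk = 0" using va_vb by (metis add_cancel_left_right)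
  then have "bilin N L bk (unitv k) = 0" by (simp add: bl_0)
  then show False using bk_lam_unit[OF kN] dpos kex by auto
qed

lemma lam_a1: "bilin N L va g = bilin N L vb g + d k * g k"
  using va_vb bl_add1 bk_gen by simp
lemma lam_a2: "bilin N L g va = bilin N L g vb - d k * g k"
  using lam_a1[of g] bl_skew[OF skew, of g va] bl_skew[OF skew, of g vb] by simp
lemma lam_ab: "bilin N L va vb = 0" "bilin N L vb va = 0"
  using lam_a1[of vb] vb_k bl_self[OF skew, of vb] bl_skew[OF skew, of vb va] by auto

lemma ek_z: "unitv k \<in> zvec N" using zvec_unitv kN by blast
lemma mek_z: "- unitv k \<in> zvec N" using zvec_uminus ek_z by blast

lemma Zk_nz: "Zk \<noteq> 0" unfolding Zk_def using X_nz mek_z by blast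
lemma Zk_inv: "inverse Zk = M (unitv k)"
  unfolding Zk_def using X_inv[OF mek_z] by simp
lemma Zk_eq: "Zk = inverse (M (unitv k))"
  unfolding Zk_def using X_inv[OF ek_z] by simp

lemma Pij_nz: "t powi i * M va + t powi j * M vb \<noteq> 0"
proof
  assume z: "t powi i * M va + t powi j * M vb = 0"
  define c where "c f = (if f = va then t powi i else t powi j)" for f
  have "(\<Sum>f\<in>{va, vb}. c f * M f) = 0" using z va_ne by (simp add: c_def)
  then have "\<forall>f\<in>{va, vb}. c f = 0"
    by (intro indepX) (auto simp: c_def va_z vb_z LR_tpow[OF ct])
  then show False using tpow_nz[OF ct] by (auto simp: c_def)
qed

lemma Pk_nz: "Pk \<noteq> 0" unfolding Pk_def by (rule Pij_nz)

lemma Y_eq: "Yk = Zk * Pk"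
proof -
  have m1: "Zk * (t powi i0 * M va) = M (- unitv k + va)"
  proof -
    have "Zk * (t powi i0 * M va) = t powi i0 * (Zk * M va)" by (metis mult.assoc tpow_comm[OF ct])
    also have "\<dots> = t powi i0 * t powi (bilin N L (- unitv k) va) * M (- unitv k + va)"
      unfolding Zk_def using XX[OF mek_z va_z] by (simp add: mult.assoc)
    also have "t powi i0 * t powi (bilin N L (- unitv k) va) = 1"
      unfolding i0_def by (simp flip: tpow_add[OF ct])
    finally show ?thesis by (simp only: mult_1_left)
  qed
  have m2: "Zk * (t powi j0 * M vb) = M (- unitv k + vb)"
  proof -
    have "Zk * (t powi j0 * M vb) = t powi j0 * (Zk * M vb)" by (metis mult.assoc tpow_comm[OF ct])
    also have "\<dots> = t powi j0 * t powi (bilin N L (- unitv k) vb) * M (- unitv k + vb)"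
      unfolding Zk_def using XX[OF mek_z vb_z] by (simp add: mult.assoc)
    also have "t powi j0 * t powi (bilin N L (- unitv k) vb) = 1"
      unfolding j0_def by (simp flip: tpow_add[OF ct])
    finally show ?thesis by (simp only: mult_1_left)
  qed
  have eqv: "- unitv k - bneg N B k = - unitv k + vb" by (simp add: vb_def)
  have Ysum: "Yk = M (- unitv k + va) + M (- unitv k + vb)"
    unfolding Yk_def mut_basis_def if_P[OF refl] va_def[symmetric] eqv ..
  have "Zk * Pk = M (- unitv k + va) + M (- unitv k + vb)" unfolding Pk_def distrib_left m1 m2 ..
  then show ?thesis by (simp only: Ysum)
qed

lemma Yk_nz: "Yk \<noteq> 0" using Y_eq Zk_nz Pk_nz by simp

lemma Yk_inv: "inverse Yk = inverse Pk * M (unitv k)"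
  using Y_eq Zk_nz Pk_nz Zk_inv by (simp add: nonzero_inverse_mult_distrib)

lemma comm_Y:
  assumes h: "h \<in> zvec N" "h k = 0"
  shows "\<exists>c. Yk * M h = t powi c * (M h * Yk)"
proof -
  define u1 where "u1 = - unitv k + va"
  define u2 where "u2 = - unitv k + vb"
  have u1z: "u1 \<in> zvec N" unfolding u1_def by (rule zvec_add[OF mek_z va_z])
  have u2z: "u2 \<in> zvec N" unfolding u2_def by (rule zvec_add[OF mek_z vb_z])
  define c where "c = bilin N L u1 h - bilin N L h u1"
  have c2: "bilin N L u2 h - bilin N L h u2 = c"
    unfolding c_def u1_def u2_def bl_add1 bl_add2 lam_a1 lam_a2 using h(2) by simp
  have "Yk = M u1 + M u2"
  proof -
    have eqv: "- unitv k - bneg N B k = - unitv k + vb" by (simp add: vb_def)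
    show ?thesis unfolding Yk_def mut_basis_def if_P[OF refl] va_def[symmetric] eqv u1_def u2_def ..
  qed
  then have "Yk * M h = t powi c * (M h * M u1) + t powi c * (M h * M u2)"
    using comm_X[OF u1z h(1)] comm_X[OF u2z h(1)] c2 c_def by (simp add: distrib_right)
  also have "\<dots> = t powi c * (M h * Yk)" using \<open>Yk = M u1 + M u2\<close> by (simp add: distrib_left)
  finally show ?thesis by blast
qed

lemma Cc_z: "Cc \<subseteq> zvec N" unfolding Cc_def by auto
lemma Cc_add: "f \<in> Cc \<Longrightarrow> g \<in> Cc \<Longrightarrow> f + g \<in> Cc" unfolding Cc_def by (auto intro!: zvec_add add_nonneg_nonneg)
lemma Cc_0: "0 \<in> Cc" unfolding Cc_def using zvec_0 by auto
lemma Cc_unit: "i \<in> {1..N} \<Longrightarrow> unitv i \<in> Cc" unfolding Cc_def using zvec_unitv by (auto simp: unitv_def)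
lemma Cc_munit: "j \<in> ex \<union> inv \<Longrightarrow> - unitv j \<in> Cc"
  unfolding Cc_def using zvec_unitv exN invN by (auto simp: unitv_def intro!: zvec_uminus)
lemma Cc_va: "va \<in> Cc" unfolding Cc_def using va_z va_nn by auto
lemma Cc_vb: "vb \<in> Cc" unfolding Cc_def using vb_z vb_nn by auto

lemma single_in:
  fixes gg :: "nat \<Rightarrow> 'f" and J :: "nat set"
  assumes g: "\<forall>j\<in>J. gg j = M (unitv j)" and J: "J \<subseteq> {1..N}" and j: "j \<in> J"
    and m: "m \<ge> 0 \<or> j \<in> ex \<union> inv"
  shows "M (\<lambda>i. if i = j then m else 0) \<in> Tge t N ex inv gg"
proof (cases "m \<ge> 0")
  case True
  then obtain n where n: "m = int n" using nonneg_int_cases by blast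
  have "(\<lambda>i. if i = j then m else 0) = (\<lambda>i. int n * unitv j i)" using n by (auto simp: unitv_def)
  then have "M (\<lambda>i. if i = j then m else 0) = gg j ^ n"
    using X_pow[OF zvec_unitv] j J g by auto
  moreover have "gg j \<in> Tge t N ex inv gg" using j J by (intro Tge.gen) auto
  ultimately show ?thesis using Tge_pow[OF _ ct] by metis
next
  case False
  define n where "n = nat (- m)"
  have n: "m = - int n" using False by (simp add: n_def)
  have jei: "j \<in> ex \<union> inv" using m False by auto
  have ujz: "unitv j \<in> zvec N" using j J zvec_unitv by blast
  have "(\<lambda>i. if i = j then m else 0) = (\<lambda>i. int n * (- unitv j) i)" using n by (auto simp: unitv_def)
  then have "M (\<lambda>i. if i = j then m else 0) = inverse (gg j) ^ n"
    using X_pow[OF zvec_uminus[OF ujz]] X_inv[OF ujz] j g by auto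
  moreover have "inverse (gg j) \<in> Tge t N ex inv gg" using jei by (rule Tge.geninv)
  ultimately show ?thesis using Tge_pow[OF _ ct] by metis
qed

lemma mon_in_Tge:
  fixes gg :: "nat \<Rightarrow> 'f" and J :: "nat set"
  assumes g: "\<forall>j\<in>J. gg j = M (unitv j)" and J: "J \<subseteq> {1..N}" and f: "f \<in> zvec N"
    and supp: "\<And>i. f i \<noteq> 0 \<Longrightarrow> i \<in> J" and neg: "\<And>i. i \<in> J \<Longrightarrow> f i < 0 \<Longrightarrow> i \<in> ex \<union> inv"
  shows "M f \<in> Tge t N ex inv gg"
proof -
  define R where "R K = (\<lambda>i. if i \<in> K then f i else 0)" for K
  have Rz: "R K \<in> zvec N" if "K \<subseteq> J" for K using that J f unfolding R_def zvec_def by auto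
  have main: "K \<subseteq> J \<Longrightarrow> M (R K) \<in> Tge t N ex inv gg" if "finite K" for K
    using that
  proof (induction K rule: finite_induct)
    case empty
    have "R {} = 0" unfolding R_def by (auto simp: zero_fun_def)
    then show ?case unfolding X0 by (simp only: X0 Tge_1[OF ct])
  next
    case (insert j K)
    define sv where "sv = (\<lambda>i. if i = j then f j else 0)"
    have jJ: "j \<in> J" and KJ: "K \<subseteq> J" using insert by auto
    have svz: "sv \<in> zvec N" using jJ J unfolding sv_def zvec_def by auto
    have eq: "R (insert j K) = R K + sv" unfolding R_def sv_def using insert(2) by auto
    have svT: "M sv \<in> Tge t N ex inv gg"
      unfolding sv_def by (rule single_in[OF g J jJ]) (use neg jJ in force)
    have mrel: "M (R K + sv) = t powi (- bilin N L (R K) sv) * M (R K) * M sv"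
      by (rule tpow_mult_eq[OF ct XX[OF Rz[OF KJ] svz]])
    have tT: "t powi (- bilin N L (R K) sv) \<in> Tge t N ex inv gg" using Tge.scalar LR_tpow[OF ct] by blast
    show ?case unfolding eq mrel by (intro Tge.mult tT insert(3)[OF KJ] svT)
  qed
  have "finite J" using J finite_subset by blast
  then have "M (R J) \<in> Tge t N ex inv gg" using main by blast
  moreover have "R J = f" unfolding R_def using supp by (auto simp: fun_eq_iff)
  ultimately show ?thesis by simp
qed

abbreviation "TT \<equiv> Tge t N ex inv (\<lambda>j. M (unitv j))"
abbreviation "TT' \<equiv> Tge t N ex inv (mut_basis N M B k)"
abbreviation "QQ \<equiv> qset t (M va) (M vb)"

lemma Cc_neg: assumes "f \<in> Cc" "i \<in> {1..N}" "f i < 0" shows "i \<in> ex \<union> inv"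
proof (rule ccontr)
  assume "i \<notin> ex \<union> inv"
  then have "i \<in> {1..N} - (ex \<union> inv)" using assms(2) by simp
  then have "f i \<ge> 0" using assms(1) unfolding Cc_def by blast
  then show False using assms(3) by simp
qed

lemma Cc_supp: assumes "f \<in> Cc" "f i \<noteq> 0" shows "i \<in> {1..N}"
  using assms unfolding Cc_def zvec_def by blast

lemma X_in_T: assumes "f \<in> Cc" shows "M f \<in> TT"
proof (rule mon_in_Tge[of "{1..N}"])
  show "f \<in> zvec N" using assms Cc_z by blast
  show "i \<in> {1..N}" if "f i \<noteq> 0" for i using Cc_supp[OF assms that] .
  show "i \<in> ex \<union> inv" if "i \<in> {1..N}" "f i < 0" for i using Cc_neg[OF assms that] .
qed auto

lemma X_in_T': assumes "f \<in> Cc" "f k = 0" shows "M f \<in> TT'"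
proof (rule mon_in_Tge[of "{1..N} - {k}"])
  show "f \<in> zvec N" using assms Cc_z by blast
  show "i \<in> {1..N} - {k}" if "f i \<noteq> 0" for i using Cc_supp[OF assms(1) that] that assms(2) by auto
  show "i \<in> ex \<union> inv" if "i \<in> {1..N} - {k}" "f i < 0" for i using Cc_neg[OF assms(1) _ that(2)] that(1) by auto
  show "\<forall>j\<in>{1..N} - {k}. mut_basis N M B k j = M (unitv j)" by (auto simp: mut_basis_def)
qed auto

lemma T_sub: "x \<in> TT \<Longrightarrow> x \<in> X.Lin Cc"
proof (induction rule: Tge.induct)
  case (scalar a) then show ?case using X.Lin_A Cc_0 by blast
next
  case (gen i) then show ?case using X.Lin_mon Cc_unit by blast
next
  case (geninv j)
  then have "inverse (M (unitv j)) = M (- unitv j)" using X_inv zvec_unitv exN invN by blast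
  then show ?case using X.Lin_mon Cc_munit geninv by simp
next
  case (add x y) then show ?case using X.Lin_add by blast
next
  case (mult x y) then show ?case using X.Lin_mult[OF Cc_z Cc_z Cc_add] by blast
qed

lemma T_sup: "x \<in> X.Lin Cc \<Longrightarrow> x \<in> TT"
proof -
  assume "x \<in> X.Lin Cc"
  then obtain S c where S: "finite S" "S \<subseteq> Cc" "\<And>f. f \<in> S \<Longrightarrow> c f \<in> laurent_ring t" "x = (\<Sum>f\<in>S. c f * M f)"
    using X.LinE by blast
  show ?thesis unfolding S(4)
  proof (rule Tge_sum[OF ct])
    fix f assume f: "f \<in> S"
    have "c f \<in> TT" using S(3)[OF f] by (rule Tge.scalar)
    moreover have "M f \<in> TT" using X_in_T f S(2) by blast
    ultimately show "c f * M f \<in> TT" by (rule Tge.mult)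
  qed
qed

end


lemma dir_incl:
  fixes T1 T2 Q :: "'f::division_ring set"
  assumes loc: "\<And>y. y \<in> T2 \<Longrightarrow> \<exists>q\<in>Q. y * q \<in> T1"
    and modp: "\<And>x q. x \<in> T1 \<Longrightarrow> q \<in> Q \<Longrightarrow> x * q \<in> smul_set p T1 \<Longrightarrow> x \<in> smul_set p T1"
    and pT2: "p \<in> T2" and mult: "\<And>u v. u \<in> T2 \<Longrightarrow> v \<in> T2 \<Longrightarrow> u * v \<in> T2"
  shows "T1 \<inter> smul_set p T2 \<subseteq> smul_set p T1 \<inter> T2"
proof
  fix x assume x: "x \<in> T1 \<inter> smul_set p T2"
  then obtain y where y: "y \<in> T2" "x = p * y" unfolding smul_set_def by blast
  obtain q where q: "q \<in> Q" "y * q \<in> T1" using loc[OF y(1)] by blast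
  have "x * q = p * (y * q)" using y(2) by (simp add: mult.assoc)
  then have "x * q \<in> smul_set p T1" using q(2) unfolding smul_set_def by blast
  then have "x \<in> smul_set p T1" using modp x q(1) by blast
  moreover have "x \<in> T2" using y mult pT2 by simp
  ultimately show "x \<in> smul_set p T1 \<inter> T2" by blast
qed

context seed
begin

lemma tsh: "x * (t powi e * y) = t powi e * (x * y)"
  using tpow_comm[OF ct, of e x] by (simp add: mult.assoc[symmetric])

lemma P_shift1:
  assumes g: "g \<in> zvec N"
  shows "\<exists>i' j'. (t powi i * M va + t powi j * M vb) * M g = M g * (t powi i' * M va + t powi j' * M vb)"
proof -
  define c1 where "c1 = bilin N L va g - bilin N L g va"
  define c2 where "c2 = bilin N L vb g - bilin N L g vb"
  have "(t powi i * M va + t powi j * M vb) * M g = t powi i * (M va * M g) + t powi j * (M vb * M g)"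
    by (simp add: distrib_right mult.assoc)
  also have "\<dots> = t powi i * (t powi c1 * (M g * M va)) + t powi j * (t powi c2 * (M g * M vb))"
    using comm_X[OF va_z g] comm_X[OF vb_z g] c1_def c2_def by simp
  also have "\<dots> = M g * (t powi (i + c1) * M va + t powi (j + c2) * M vb)"
  proof -
    have e1: "t powi i * (t powi c1 * (M g * M va)) = M g * (t powi (i + c1) * M va)"
    proof -
      have "M g * (t powi (i + c1) * M va) = t powi (i + c1) * (M g * M va)" by (rule tsh)
      then show ?thesis by (simp add: tpow_add[OF ct] mult.assoc)
    qed
    have e2: "t powi j * (t powi c2 * (M g * M vb)) = M g * (t powi (j + c2) * M vb)"
    proof -
      have "M g * (t powi (j + c2) * M vb) = t powi (j + c2) * (M g * M vb)" by (rule tsh)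
      then show ?thesis by (simp add: tpow_add[OF ct] mult.assoc)
    qed
    show ?thesis by (simp only: distrib_left e1 e2)
  qed
  finally show ?thesis by blast
qed

lemma P_shift2:
  assumes g: "g \<in> zvec N"
  shows "\<exists>i' j'. M g * (t powi i * M va + t powi j * M vb) = (t powi i' * M va + t powi j' * M vb) * M g"
proof -
  define c1 where "c1 = bilin N L g va - bilin N L va g"
  define c2 where "c2 = bilin N L g vb - bilin N L vb g"
  have "M g * (t powi i * M va + t powi j * M vb) = t powi i * (M g * M va) + t powi j * (M g * M vb)"
    by (simp only: distrib_left tsh)
  also have "\<dots> = t powi i * (t powi c1 * (M va * M g)) + t powi j * (t powi c2 * (M vb * M g))"
    using comm_X[OF g va_z] comm_X[OF g vb_z] c1_def c2_def by simp
  also have "\<dots> = (t powi (i + c1) * M va + t powi (j + c2) * M vb) * M g"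
    by (simp add: distrib_right tpow_add[OF ct] mult.assoc)
  finally show ?thesis by blast
qed

lemma Mab: "M va * M vb = M vb * M va"
  using comm_X[OF va_z vb_z] lam_ab by simp

definition "comm2 x \<longleftrightarrow> x * M va = M va * x \<and> x * M vb = M vb * x"

lemma comm2_P: "comm2 x \<Longrightarrow> x * (t powi i * M va + t powi j * M vb) = (t powi i * M va + t powi j * M vb) * x"
  unfolding comm2_def by (simp add: distrib_left distrib_right tsh mult.assoc)

lemma comm2_Pself: "comm2 (t powi i * M va + t powi j * M vb)"
  unfolding comm2_def
proof
  show "(t powi i * M va + t powi j * M vb) * M va = M va * (t powi i * M va + t powi j * M vb)"
    by (simp add: distrib_left distrib_right mult.assoc tsh Mab)
  show "(t powi i * M va + t powi j * M vb) * M vb = M vb * (t powi i * M va + t powi j * M vb)"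
    by (simp add: distrib_left distrib_right mult.assoc tsh Mab)
qed

lemma comm2_mult: "comm2 x \<Longrightarrow> comm2 y \<Longrightarrow> comm2 (x * y)"
proof -
  have ac: "u * v * w = u * (v * w)" for u v w :: 'f by (rule mult.assoc)
  assume "comm2 x" "comm2 y"
  then have h: "x * M va = M va * x" "x * M vb = M vb * x" "y * M va = M va * y" "y * M vb = M vb * y"
    unfolding comm2_def by auto
  have "x * y * M va = M va * (x * y)"
    unfolding ac h(3) unfolding ac[symmetric] h(1) ..
  moreover have "x * y * M vb = M vb * (x * y)"
    unfolding ac h(4) unfolding ac[symmetric] h(2) ..
  ultimately show ?thesis unfolding comm2_def by blast
qed

lemma Q_comm2: "q \<in> QQ \<Longrightarrow> comm2 q"
proof (induction rule: qset.induct)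
  case q1 show ?case by (simp add: comm2_def)
next
  case (qP q i j) then show ?case by (intro comm2_mult comm2_Pself)
qed

lemma Q_comm: assumes "q1 \<in> QQ" "q2 \<in> QQ" shows "q1 * q2 = q2 * q1"
  using assms(2,1)
proof (induction rule: qset.induct)
  case q1 then show ?case by simp
next
  case (qP q i j)
  have cP: "q1 * (t powi i * M va + t powi j * M vb) = (t powi i * M va + t powi j * M vb) * q1"
    by (rule comm2_P[OF Q_comm2[OF qP.prems]])
  have "q1 * ((t powi i * M va + t powi j * M vb) * q) = (q1 * (t powi i * M va + t powi j * M vb)) * q"
    by (rule mult.assoc[symmetric])
  also have "\<dots> = (t powi i * M va + t powi j * M vb) * (q1 * q)"
    unfolding cP by (rule mult.assoc)
  finally have "q1 * ((t powi i * M va + t powi j * M vb) * q) = (t powi i * M va + t powi j * M vb) * (q1 * q)" .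
  also have "\<dots> = (t powi i * M va + t powi j * M vb) * q * q1" using qP.IH[OF qP.prems] by (simp add: mult.assoc)
  finally show ?case .
qed

lemma Q_mult: "q1 \<in> QQ \<Longrightarrow> q2 \<in> QQ \<Longrightarrow> q1 * q2 \<in> QQ"
  by (induction q1 rule: qset.induct) (auto simp: mult.assoc intro: qset.qP)

lemma Pk_Q: "Pk \<in> QQ"
proof -
  have "(t powi i0 * M va + t powi j0 * M vb) * 1 \<in> QQ" by (rule qset.qP[OF qset.q1])
  then show ?thesis by (simp add: Pk_def)
qed

lemma Q_nz: "q \<in> QQ \<Longrightarrow> q \<noteq> 0"
  by (induction rule: qset.induct) (auto simp: Pij_nz)

lemma Q_conj: assumes g: "g \<in> zvec N" and q: "q \<in> QQ" shows "\<exists>q'\<in>QQ. M g * q' = q * M g"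
  using q
proof (induction rule: qset.induct)
  case q1 then show ?case using qset.q1 by force
next
  case (qP q i j)
  obtain q' where q': "q' \<in> QQ" "M g * q' = q * M g" using qP.IH by blast
  obtain i' j' where s: "(t powi i * M va + t powi j * M vb) * M g = M g * (t powi i' * M va + t powi j' * M vb)"
    using P_shift1[OF g] by blast
  have "(t powi i * M va + t powi j * M vb) * q * M g = M g * ((t powi i' * M va + t powi j' * M vb) * q')"
  proof -
    have "(t powi i * M va + t powi j * M vb) * q * M g = (t powi i * M va + t powi j * M vb) * (M g * q')"
      unfolding mult.assoc q'(2) ..
    also have "\<dots> = ((t powi i * M va + t powi j * M vb) * M g) * q'" by (rule mult.assoc[symmetric])
    also have "\<dots> = M g * ((t powi i' * M va + t powi j' * M vb) * q')" unfolding s by (rule mult.assoc)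
    finally show ?thesis .
  qed
  then have "M g * ((t powi i' * M va + t powi j' * M vb) * q') = (t powi i * M va + t powi j * M vb) * q * M g"
    by (rule sym)
  then show ?case using qset.qP[OF q'(1)] by blast
qed

lemma Q_conj': assumes g: "g \<in> zvec N" and q: "q \<in> QQ" shows "\<exists>q'\<in>QQ. q' * M g = M g * q"
  using q
proof (induction rule: qset.induct)
  case q1 then show ?case using qset.q1 by force
next
  case (qP q i j)
  obtain q' where q': "q' \<in> QQ" "q' * M g = M g * q" using qP.IH by blast
  obtain i' j' where s: "M g * (t powi i * M va + t powi j * M vb) = (t powi i' * M va + t powi j' * M vb) * M g"
    using P_shift2[OF g] by blast
  have "((t powi i' * M va + t powi j' * M vb) * q') * M g = M g * ((t powi i * M va + t powi j * M vb) * q)"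
    proof -
      have "((t powi i' * M va + t powi j' * M vb) * q') * M g = (t powi i' * M va + t powi j' * M vb) * (M g * q)"
        using q'(2) by (simp add: mult.assoc)
      also have "\<dots> = M g * (t powi i * M va + t powi j * M vb) * q" using s by (simp add: mult.assoc)
      finally show ?thesis by (simp add: mult.assoc)
    qed
  then show ?case using qset.qP[OF q'(1)] by blast
qed

lemma Q_T: "q \<in> QQ \<Longrightarrow> q \<in> TT"
proof (induction rule: qset.induct)
  case q1 then show ?case using Tge_1[OF ct] by blast
next
  case (qP q i j)
  have "M va \<in> TT" "M vb \<in> TT" using X_in_T Cc_va Cc_vb by auto
  moreover have "t powi e \<in> TT" for e by (rule Tge.scalar[OF LR_tpow[OF ct]])
  ultimately show ?case using qP by (intro Tge.mult Tge.add) auto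
qed

lemma Q_T': "q \<in> QQ \<Longrightarrow> q \<in> TT'"
proof (induction rule: qset.induct)
  case q1 then show ?case using Tge_1[OF ct] by blast
next
  case (qP q i j)
  have "M va \<in> TT'" "M vb \<in> TT'" using X_in_T' Cc_va Cc_vb va_k vb_k by auto
  moreover have "t powi e \<in> TT'" for e by (rule Tge.scalar[OF LR_tpow[OF ct]])
  ultimately show ?case using qP by (intro Tge.mult Tge.add) auto
qed

lemma TT_gen: "i \<in> {1..N} \<Longrightarrow> M (unitv i) \<in> TT" by (rule Tge.gen)
lemma TT_geninv: "j \<in> ex \<union> inv \<Longrightarrow> inverse (M (unitv j)) \<in> TT" by (rule Tge.geninv)
lemma TT'_gen: "i \<in> {1..N} \<Longrightarrow> mut_basis N M B k i \<in> TT'" by (rule Tge.gen)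
lemma TT'_geninv: "j \<in> ex \<union> inv \<Longrightarrow> inverse (mut_basis N M B k j) \<in> TT'" by (rule Tge.geninv)

lemma unit_z: "i \<in> {1..N} \<Longrightarrow> unitv i \<in> zvec N" by (rule zvec_unitv)
lemma exinv_N: "j \<in> ex \<union> inv \<Longrightarrow> j \<in> {1..N}" using exN invN by auto

lemma Ore_T: "z \<in> TT \<Longrightarrow> \<forall>q\<in>QQ. \<exists>q'\<in>QQ. \<exists>z'\<in>TT. z * q' = q * z'"
proof (induction rule: Tge.induct)
  case (scalar a)
  show ?case using LR_comm[OF ct scalar] Tge.scalar[OF scalar] by blast
next
  case (gen i)
  show ?case
  proof
    fix q assume q: "q \<in> QQ"
    obtain q' where "q' \<in> QQ" "M (unitv i) * q' = q * M (unitv i)" using Q_conj[OF unit_z[OF gen] q] by blast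
    then show "\<exists>q'\<in>QQ. \<exists>z'\<in>TT. M (unitv i) * q' = q * z'" using TT_gen[OF gen] by blast
  qed
next
  case (geninv j)
  have jN: "j \<in> {1..N}" using exinv_N[OF geninv] .
  have e: "inverse (M (unitv j)) = M (- unitv j)" using X_inv[OF unit_z[OF jN]] .
  show ?case
  proof
    fix q assume q: "q \<in> QQ"
    obtain q' where q': "q' \<in> QQ" "M (- unitv j) * q' = q * M (- unitv j)"
      using Q_conj[OF zvec_uminus[OF unit_z[OF jN]] q] by blast
    have hh: "inverse (M (unitv j)) * q' = q * inverse (M (unitv j))" unfolding e by (rule q'(2))
    show "\<exists>q'\<in>QQ. \<exists>z'\<in>TT. inverse (M (unitv j)) * q' = q * z'"
      using hh q'(1) TT_geninv[OF geninv] by blast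
  qed
next
  case (add x y)
  show ?case
  proof
    fix q assume q: "q \<in> QQ"
    obtain q1 z1 where 1: "q1 \<in> QQ" "z1 \<in> TT" "x * q1 = q * z1" using add.IH(1) q by blast
    obtain q2 z2 where 2: "q2 \<in> QQ" "z2 \<in> TT" "y * q2 = q * z2" using add.IH(2) q by blast
    have "(x + y) * (q1 * q2) = q * (z1 * q2 + z2 * q1)"
    proof -
      have "(x + y) * (q1 * q2) = (x * q1) * q2 + (y * q2) * q1"
        using Q_comm[OF 1(1) 2(1)] by (simp add: distrib_right mult.assoc)
      also have "\<dots> = q * (z1 * q2 + z2 * q1)" using 1 2 by (simp add: distrib_left mult.assoc)
      finally show ?thesis .
    qed
    moreover have "z1 * q2 + z2 * q1 \<in> TT" using 1 2 Q_T by (intro Tge.add Tge.mult) auto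
    ultimately show "\<exists>q'\<in>QQ. \<exists>z'\<in>TT. (x + y) * q' = q * z'" using Q_mult[OF 1(1) 2(1)] by blast
  qed
next
  case (mult x y)
  show ?case
  proof
    fix q assume q: "q \<in> QQ"
    obtain q1 z1 where 1: "q1 \<in> QQ" "z1 \<in> TT" "x * q1 = q * z1" using mult.IH(1) q by blast
    obtain q2 z2 where 2: "q2 \<in> QQ" "z2 \<in> TT" "y * q2 = q1 * z2" using mult.IH(2) 1(1) by blast
    have "x * y * q2 = q * (z1 * z2)"
    proof -
      have "x * y * q2 = x * (y * q2)" by (rule mult.assoc)
      also have "\<dots> = x * q1 * z2" unfolding 2(3) by (rule mult.assoc[symmetric])
      also have "\<dots> = q * (z1 * z2)" unfolding 1(3) by (rule mult.assoc)
      finally show ?thesis .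
    qed
    then show "\<exists>q'\<in>QQ. \<exists>z'\<in>TT. x * y * q' = q * z'" using 1 2 Tge.mult by blast
  qed
qed

lemma mb_ne: "j \<noteq> k \<Longrightarrow> mut_basis N M B k j = M (unitv j)" by (simp add: mut_basis_def)
lemma mb_k: "mut_basis N M B k k = Yk" by (simp add: Yk_def)

lemma Ore_T': "z \<in> TT' \<Longrightarrow> \<forall>q\<in>QQ. \<exists>q'\<in>QQ. \<exists>z'\<in>TT'. z * q' = q * z'"
proof (induction rule: Tge.induct)
  case (scalar a)
  show ?case using LR_comm[OF ct scalar] Tge.scalar[OF scalar] by blast
next
  case (gen i)
  show ?case
  proof
    fix q assume q: "q \<in> QQ"
    show "\<exists>q'\<in>QQ. \<exists>z'\<in>TT'. mut_basis N M B k i * q' = q * z'"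
    proof (cases "i = k")
      case True
      obtain q' where q': "q' \<in> QQ" "Zk * q' = q * Zk" using Q_conj[OF mek_z q] unfolding Zk_def by blast
      have "Yk * q' = q * Yk"
      proof -
        have "Yk * q' = Zk * (Pk * q')" using Y_eq by (simp add: mult.assoc)
        also have "\<dots> = Zk * q' * Pk" using Q_comm[OF Pk_Q q'(1)] by (simp add: mult.assoc)
        also have "\<dots> = q * Yk" using q'(2) Y_eq by (simp add: mult.assoc)
        finally show ?thesis .
      qed
      then have hh: "mut_basis N M B k i * q' = q * mut_basis N M B k i" using True mb_k by simp
      show ?thesis using hh q'(1) TT'_gen[OF gen] by blast
    next
      case False
      obtain q' where q': "q' \<in> QQ" "M (unitv i) * q' = q * M (unitv i)" using Q_conj[OF unit_z[OF gen] q] by blast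
      have hh: "mut_basis N M B k i * q' = q * mut_basis N M B k i" unfolding mb_ne[OF False] by (rule q'(2))
      show ?thesis using hh q'(1) TT'_gen[OF gen] by blast
    qed
  qed
next
  case (geninv j)
  have jN: "j \<in> {1..N}" using exinv_N[OF geninv] .
  show ?case
  proof
    fix q assume q: "q \<in> QQ"
    show "\<exists>q'\<in>QQ. \<exists>z'\<in>TT'. inverse (mut_basis N M B k j) * q' = q * z'"
    proof (cases "j = k")
      case True
      obtain q' where q': "q' \<in> QQ" "q' * Zk = Zk * q" using Q_conj'[OF mek_z q] unfolding Zk_def by blast
      have qY: "q' * Yk = Yk * q"
      proof -
        have "q' * Yk = Zk * q * Pk" using Y_eq q'(2) by (simp add: mult.assoc[symmetric])
        also have "\<dots> = Zk * Pk * q" using Q_comm[OF q Pk_Q] by (simp add: mult.assoc)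
        also have "\<dots> = Yk * q" using Y_eq by simp
        finally show ?thesis .
      qed
      have "inverse Yk * q' = q * inverse Yk"
      proof -
        have "inverse Yk * q' = inverse Yk * (q' * Yk) * inverse Yk" using Yk_nz by (simp add: mult.assoc)
        also have "\<dots> = q * inverse Yk" using Yk_nz qY by (simp add: mult.assoc[symmetric])
        finally show ?thesis .
      qed
      then have hh: "inverse (mut_basis N M B k j) * q' = q * inverse (mut_basis N M B k j)" using True mb_k by simp
      show ?thesis using hh q'(1) TT'_geninv[OF geninv] by blast
    next
      case False
      have e: "inverse (mut_basis N M B k j) = M (- unitv j)" using X_inv[OF unit_z[OF jN]] mb_ne[OF False] by simp
      obtain q' where q': "q' \<in> QQ" "M (- unitv j) * q' = q * M (- unitv j)"
        using Q_conj[OF zvec_uminus[OF unit_z[OF jN]] q] by blast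
      have hh: "inverse (mut_basis N M B k j) * q' = q * inverse (mut_basis N M B k j)" unfolding e by (rule q'(2))
      show ?thesis using hh q'(1) TT'_geninv[OF geninv] by blast
    qed
  qed
next
  case (add x y)
  show ?case
  proof
    fix q assume q: "q \<in> QQ"
    obtain q1 z1 where 1: "q1 \<in> QQ" "z1 \<in> TT'" "x * q1 = q * z1" using add.IH(1) q by blast
    obtain q2 z2 where 2: "q2 \<in> QQ" "z2 \<in> TT'" "y * q2 = q * z2" using add.IH(2) q by blast
    have "(x + y) * (q1 * q2) = q * (z1 * q2 + z2 * q1)"
    proof -
      have "(x + y) * (q1 * q2) = (x * q1) * q2 + (y * q2) * q1"
        using Q_comm[OF 1(1) 2(1)] by (simp add: distrib_right mult.assoc)
      also have "\<dots> = q * (z1 * q2 + z2 * q1)" using 1 2 by (simp add: distrib_left mult.assoc)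
      finally show ?thesis .
    qed
    moreover have "z1 * q2 + z2 * q1 \<in> TT'" using 1 2 Q_T' by (intro Tge.add Tge.mult) auto
    ultimately show "\<exists>q'\<in>QQ. \<exists>z'\<in>TT'. (x + y) * q' = q * z'" using Q_mult[OF 1(1) 2(1)] by blast
  qed
next
  case (mult x y)
  show ?case
  proof
    fix q assume q: "q \<in> QQ"
    obtain q1 z1 where 1: "q1 \<in> QQ" "z1 \<in> TT'" "x * q1 = q * z1" using mult.IH(1) q by blast
    obtain q2 z2 where 2: "q2 \<in> QQ" "z2 \<in> TT'" "y * q2 = q1 * z2" using mult.IH(2) 1(1) by blast
    have "x * y * q2 = q * (z1 * z2)"
    proof -
      have "x * y * q2 = x * (y * q2)" by (rule mult.assoc)
      also have "\<dots> = x * q1 * z2" unfolding 2(3) by (rule mult.assoc[symmetric])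
      also have "\<dots> = q * (z1 * z2)" unfolding 1(3) by (rule mult.assoc)
      finally show ?thesis .
    qed
    then show "\<exists>q'\<in>QQ. \<exists>z'\<in>TT'. x * y * q' = q * z'" using 1 2 Tge.mult by blast
  qed
qed

end


context seed
begin

lemma TT_mult: "u \<in> TT \<Longrightarrow> v \<in> TT \<Longrightarrow> u * v \<in> TT" by (rule Tge.mult)
lemma TT'_mult: "u \<in> TT' \<Longrightarrow> v \<in> TT' \<Longrightarrow> u * v \<in> TT'" by (rule Tge.mult)

lemma kei: "k \<in> ex \<union> inv" using kex by blast

lemma Zk_T: "Zk \<in> TT" using TT_geninv[OF kei] Zk_eq by simp
lemma Yk_T: "Yk \<in> TT" using Y_eq Zk_T Q_T[OF Pk_Q] TT_mult by simp
lemma Yk_T': "Yk \<in> TT'" using TT'_gen[OF kN] mb_k by simp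
lemma Yinv_T': "inverse Yk \<in> TT'" using TT'_geninv[OF kei] mb_k by simp

lemma loc_T'T: "y \<in> TT' \<Longrightarrow> \<exists>q\<in>QQ. y * q \<in> TT"
proof (induction rule: Tge.induct)
  case (scalar a)
  then show ?case using qset.q1 Tge.scalar[OF scalar] by force
next
  case (gen i)
  show ?case
  proof (cases "i = k")
    case True
    then show ?thesis using Yk_T mb_k qset.q1 by force
  next
    case False
    then show ?thesis using TT_gen[OF gen] mb_ne[OF False] qset.q1 by force
  qed
next
  case (geninv j)
  show ?case
  proof (cases "j = k")
    case True
    obtain q where q: "q \<in> QQ" "M (unitv k) * q = Pk * M (unitv k)" using Q_conj[OF ek_z Pk_Q] by blast
    have "inverse Yk * q = M (unitv k)"
    proof -
      have "inverse Yk * q = inverse Pk * (M (unitv k) * q)" using Yk_inv by (simp add: mult.assoc)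
      also have "\<dots> = M (unitv k)" using q(2) Pk_nz by (simp add: mult.assoc[symmetric])
      finally show ?thesis .
    qed
    then show ?thesis using True q(1) mb_k TT_gen[OF kN] by force
  next
    case False
    then show ?thesis using TT_geninv[OF geninv] mb_ne[OF False] qset.q1 by force
  qed
next
  case (add x y)
  obtain q1 where 1: "q1 \<in> QQ" "x * q1 \<in> TT" using add.IH(1) by blast
  obtain q2 where 2: "q2 \<in> QQ" "y * q2 \<in> TT" using add.IH(2) by blast
  have "(x + y) * (q1 * q2) = (x * q1) * q2 + (y * q2) * q1"
    using Q_comm[OF 1(1) 2(1)] by (simp add: distrib_right mult.assoc)
  moreover have "(x * q1) * q2 + (y * q2) * q1 \<in> TT"
    by (rule Tge.add[OF TT_mult[OF 1(2) Q_T[OF 2(1)]] TT_mult[OF 2(2) Q_T[OF 1(1)]]])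
  ultimately show ?case using Q_mult[OF 1(1) 2(1)] by force
next
  case (mult x y)
  obtain q1 where 1: "q1 \<in> QQ" "x * q1 \<in> TT" using mult.IH(1) by blast
  obtain q2 where 2: "q2 \<in> QQ" "y * q2 \<in> TT" using mult.IH(2) by blast
  obtain q' z' where 3: "q' \<in> QQ" "z' \<in> TT" "(y * q2) * q' = q1 * z'" using Ore_T[OF 2(2)] 1(1) by blast
  have "x * y * (q2 * q') = (x * q1) * z'"
  proof -
    have "x * y * (q2 * q') = x * ((y * q2) * q')" by (simp add: mult.assoc)
    also have "\<dots> = (x * q1) * z'" unfolding 3(3) by (simp add: mult.assoc)
    finally show ?thesis .
  qed
  moreover have "(x * q1) * z' \<in> TT" using 1 3 TT_mult by blast
  ultimately show ?case using Q_mult[OF 2(1) 3(1)] by force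
qed

lemma loc_TT': "y \<in> TT \<Longrightarrow> \<exists>q\<in>QQ. y * q \<in> TT'"
proof (induction rule: Tge.induct)
  case (scalar a)
  then show ?case using qset.q1 Tge.scalar[OF scalar] by force
next
  case (gen i)
  show ?case
  proof (cases "i = k")
    case True
    have "M (unitv k) = Pk * inverse Yk" using Yk_inv Pk_nz by (simp add: mult.assoc[symmetric])
    then have "M (unitv k) \<in> TT'" using Q_T'[OF Pk_Q] Yinv_T' TT'_mult by simp
    then show ?thesis using True qset.q1 by force
  next
    case False
    then show ?thesis using TT'_gen[OF gen] mb_ne[OF False] qset.q1 by force
  qed
next
  case (geninv j)
  show ?case
  proof (cases "j = k")
    case True
    have "inverse (M (unitv k)) * Pk = Yk" using Zk_eq Y_eq by simp
    then show ?thesis using True Pk_Q Yk_T' by force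
  next
    case False
    then show ?thesis using TT'_geninv[OF geninv] mb_ne[OF False] qset.q1 by force
  qed
next
  case (add x y)
  obtain q1 where 1: "q1 \<in> QQ" "x * q1 \<in> TT'" using add.IH(1) by blast
  obtain q2 where 2: "q2 \<in> QQ" "y * q2 \<in> TT'" using add.IH(2) by blast
  have "(x + y) * (q1 * q2) = (x * q1) * q2 + (y * q2) * q1"
    using Q_comm[OF 1(1) 2(1)] by (simp add: distrib_right mult.assoc)
  moreover have "(x * q1) * q2 + (y * q2) * q1 \<in> TT'"
    by (rule Tge.add[OF TT'_mult[OF 1(2) Q_T'[OF 2(1)]] TT'_mult[OF 2(2) Q_T'[OF 1(1)]]])
  ultimately show ?case using Q_mult[OF 1(1) 2(1)] by force
next
  case (mult x y)
  obtain q1 where 1: "q1 \<in> QQ" "x * q1 \<in> TT'" using mult.IH(1) by blast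
  obtain q2 where 2: "q2 \<in> QQ" "y * q2 \<in> TT'" using mult.IH(2) by blast
  obtain q' z' where 3: "q' \<in> QQ" "z' \<in> TT'" "(y * q2) * q' = q1 * z'" using Ore_T'[OF 2(2)] 1(1) by blast
  have "x * y * (q2 * q') = (x * q1) * z'"
  proof -
    have "x * y * (q2 * q') = x * ((y * q2) * q')" by (simp add: mult.assoc)
    also have "\<dots> = (x * q1) * z'" unfolding 3(3) by (simp add: mult.assoc)
    finally show ?thesis .
  qed
  moreover have "(x * q1) * z' \<in> TT'" using 1 3 TT'_mult by blast
  ultimately show ?case using Q_mult[OF 2(1) 3(1)] by force
qed

lemma ModP_T:
  assumes pA: "p \<in> laurent_ring t" and x: "x \<in> TT" and q: "q \<in> QQ" and xq: "x * q \<in> smul_set p TT"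
  shows "x \<in> smul_set p TT"
proof -
  have xL: "x \<in> X.Lin Cc" using T_sub[OF x] .
  have "x * q \<in> smul_set p (X.Lin (zvec N))"
    using xq T_sub X.Lin_mono[OF Cc_z] unfolding smul_set_def by blast
  then have "x \<in> smul_set p (X.Lin Cc)" using X.ModP_prod[OF pA va_z vb_z va_ne q Cc_z xL] by blast
  then show ?thesis using T_sup unfolding smul_set_def by blast
qed

end


context seed
begin

definition "Xp f = M (f(k := 0)) * Yk powi (f k)"

lemma upd_z: "f \<in> zvec N \<Longrightarrow> f(k := 0) \<in> zvec N" unfolding zvec_def by auto

lemma YM:
  assumes h: "h \<in> zvec N" "h k = 0"
  shows "\<exists>c. \<forall>n. Yk powi n * M h = t powi (c * n) * (M h * Yk powi n)"
proof -
  obtain c where c: "Yk * M h = t powi c * (M h * Yk)" using comm_Y[OF h] by blast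
  have "Yk powi n * M h = (t powi c) powi n * (M h * Yk powi n)" for n
    by (rule powi_comm_scalar[OF tpow_comm[OF ct] Yk_nz tpow_nz[OF ct] c])
  then show ?thesis by (intro exI[of _ c]) (simp add: power_int_mult)
qed

lemma Ypow_add: "Yk powi (m + n) = Yk powi m * Yk powi n"
  using Yk_nz by (simp add: power_int_add)

lemma Xp_mult:
  assumes f: "f \<in> zvec N" and g: "g \<in> zvec N"
  shows "\<exists>e. Xp f * Xp g = t powi e * Xp (f + g)"
proof -
  have gz: "g(k := 0) \<in> zvec N" using upd_z[OF g] .
  have fz: "f(k := 0) \<in> zvec N" using upd_z[OF f] .
  obtain c where c: "\<And>n. Yk powi n * M (g(k := 0)) = t powi (c * n) * (M (g(k := 0)) * Yk powi n)"
    using YM[OF gz] by auto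
  have "Xp f * Xp g = M (f(k := 0)) * (Yk powi (f k) * M (g(k := 0))) * Yk powi (g k)"
    unfolding Xp_def by (simp add: mult.assoc)
  also have "\<dots> = M (f(k := 0)) * (t powi (c * f k) * (M (g(k := 0)) * Yk powi (f k))) * Yk powi (g k)"
    by (simp only: c)
  also have "\<dots> = t powi (c * f k) * ((M (f(k := 0)) * M (g(k := 0))) * (Yk powi (f k) * Yk powi (g k)))"
    by (simp add: tsh mult.assoc)
  also have "\<dots> = t powi (c * f k) * (t powi (bilin N L (f(k := 0)) (g(k := 0))) * M (f(k := 0) + g(k := 0)) * Yk powi (f k + g k))"
    by (simp only: XX[OF fz gz] Ypow_add)
  also have "\<dots> = t powi (c * f k + bilin N L (f(k := 0)) (g(k := 0))) * Xp (f + g)"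
  proof -
    have "f(k := 0) + g(k := 0) = (f + g)(k := 0)" by (simp add: fun_eq_iff)
    then show ?thesis unfolding Xp_def by (simp add: tpow_add[OF ct] mult.assoc)
  qed
  finally show ?thesis by blast
qed

lemma Xp0: "Xp 0 = 1"
proof -
  have "(0 :: nat \<Rightarrow> int)(k := 0) = 0" by (simp add: fun_eq_iff)
  then show ?thesis unfolding Xp_def using X0 by simp
qed

lemma Yk_L: "Yk \<in> X.Lin {g \<in> zvec N. g k = - 1}"
proof -
  have eqv: "- unitv k - bneg N B k = - unitv k + vb" by (simp add: vb_def)
  have Ysum: "Yk = M (- unitv k + va) + M (- unitv k + vb)"
    unfolding Yk_def mut_basis_def if_P[OF refl] va_def[symmetric] eqv ..
  have "- unitv k + va \<in> {g \<in> zvec N. g k = - 1}" using zvec_add[OF mek_z va_z] va_k by (simp add: unitv_def)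
  moreover have "- unitv k + vb \<in> {g \<in> zvec N. g k = - 1}" using zvec_add[OF mek_z vb_z] vb_k by (simp add: unitv_def)
  ultimately show ?thesis unfolding Ysum by (intro X.Lin_add X.Lin_mon)
qed

lemma Ypow_L: "Yk ^ n \<in> X.Lin {g \<in> zvec N. g k = - int n}"
proof (induction n)
  case 0
  show ?case using X.Lin_A[of "{g \<in> zvec N. g k = - int 0}" 1] zvec_0 LR_1[OF ct] by simp
next
  case (Suc n)
  have "Yk ^ n * Yk \<in> X.Lin {g \<in> zvec N. g k = - int (Suc n)}"
    by (rule X.Lin_mult[OF _ _ _ Suc Yk_L]) (auto intro: zvec_add)
  then show ?case by (simp only: power_Suc2)
qed

lemma upd_inj: "inj_on (\<lambda>f. f(k := 0)) {f. f k = j}"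
proof (rule inj_onI)
  fix f g assume "f \<in> {f. f k = j}" "g \<in> {f. f k = j}" "f(k := 0) = g(k := 0)"
  then show "f = g" by (auto simp: fun_eq_iff) (metis fun_upd_other)
qed

lemma indepXp:
  assumes S: "finite S" "S \<subseteq> zvec N" "\<forall>f\<in>S. c f \<in> laurent_ring t"
    and z: "(\<Sum>f\<in>S. c f * Xp f) = 0"
  shows "\<forall>f\<in>S. c f = 0"
proof
  fix f0 assume f0: "f0 \<in> S"
  define m where "m = (\<Sum>f\<in>S. \<bar>f k\<bar>)"
  have mge: "m + f k \<ge> 0" if "f \<in> S" for f
  proof -
    have "\<bar>f k\<bar> \<le> m" unfolding m_def using member_le_sum[OF that, of "\<lambda>f. \<bar>f k\<bar>"] S(1) by simp
    then show ?thesis by simp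
  qed
  have ex: "\<forall>f\<in>S. \<exists>e. Yk powi m * M (f(k := 0)) = t powi e * (M (f(k := 0)) * Yk powi m)"
  proof
    fix f assume "f \<in> S"
    then have "f(k := 0) \<in> zvec N" "(f(k := 0)) k = 0" using S(2) upd_z by auto
    then obtain c where "\<forall>n. Yk powi n * M (f(k := 0)) = t powi (c * n) * (M (f(k := 0)) * Yk powi n)"
      using YM by blast
    then show "\<exists>e. Yk powi m * M (f(k := 0)) = t powi e * (M (f(k := 0)) * Yk powi m)" by blast
  qed
  from bchoice[OF ex] obtain e where e: "\<forall>f\<in>S. Yk powi m * M (f(k := 0)) = t powi (e f) * (M (f(k := 0)) * Yk powi m)"
    by blast
  define cc where "cc f = c f * t powi (e f)" for f
  define n where "n f = m + f k" for f
  have ccA: "cc f \<in> laurent_ring t" if "f \<in> S" for f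
    using S(3) that LR_mult[OF ct] LR_tpow[OF ct] unfolding cc_def by blast
  have "0 = Yk powi m * (\<Sum>f\<in>S. c f * Xp f)" using z by simp
  also have "\<dots> = (\<Sum>f\<in>S. cc f * M (f(k := 0)) * Yk powi (n f))"
  proof (simp only: sum_distrib_left, intro sum.cong refl)
    fix f assume f: "f \<in> S"
    have "Yk powi m * (c f * Xp f) = c f * ((Yk powi m * M (f(k := 0))) * Yk powi (f k))"
      unfolding Xp_def using LR_comm[OF ct S(3)[rule_format, OF f], of "Yk powi m"] by (simp add: mult.assoc[symmetric])
    also have "\<dots> = c f * (t powi (e f) * (M (f(k := 0)) * Yk powi m) * Yk powi (f k))"
      using e f by simp
    also have "\<dots> = cc f * M (f(k := 0)) * Yk powi (n f)"
      unfolding cc_def n_def Ypow_add by (simp add: mult.assoc)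
    finally show "Yk powi m * (c f * Xp f) = cc f * M (f(k := 0)) * Yk powi (n f)" .
  qed
  also have "\<dots> = (\<Sum>j\<in>n ` S. \<Sum>f\<in>{f \<in> S. n f = j}. cc f * M (f(k := 0)) * Yk powi (n f))"
    by (rule sum.image_gen[OF S(1)])
  also have "\<dots> = (\<Sum>j\<in>n ` S. (\<Sum>f\<in>{f \<in> S. n f = j}. cc f * M (f(k := 0))) * Yk powi j)"
    by (intro sum.cong refl) (simp add: sum_distrib_right)
  finally have s0: "(\<Sum>j\<in>n ` S. (\<Sum>f\<in>{f \<in> S. n f = j}. cc f * M (f(k := 0))) * Yk powi j) = 0" by simp
  define D where "D j = {g \<in> zvec N. g k = - j}" for j :: int
  have inL: "(\<Sum>f\<in>{f \<in> S. n f = j}. cc f * M (f(k := 0))) * Yk powi j \<in> X.Lin (D j)" if j: "j \<in> n ` S" for j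
  proof -
    have j0: "j \<ge> 0" using j mge n_def by auto
    have A: "(\<Sum>f\<in>{f \<in> S. n f = j}. cc f * M (f(k := 0))) \<in> X.Lin {g \<in> zvec N. g k = 0}"
      by (rule X.Lin_gen) (use S ccA upd_z in auto)
    have "Yk powi j = Yk ^ nat j" using j0 by (simp add: power_int_def)
    then have B: "Yk powi j \<in> X.Lin (D j)" using Ypow_L[of "nat j"] j0 unfolding D_def by simp
    show ?thesis by (rule X.Lin_mult[OF _ _ _ A B]) (auto simp: D_def intro: zvec_add)
  qed
  have j0: "n f0 \<in> n ` S" using f0 by blast
  have "(\<Sum>f\<in>{f \<in> S. n f = n f0}. cc f * M (f(k := 0))) * Yk powi (n f0) = 0"
  proof (rule X.DISJ[where D=D, OF finite_imageI[OF S(1)] _ _ inL s0 j0])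
    show "D j \<subseteq> zvec N" for j unfolding D_def by auto
    show "D j \<inter> D j' = {}" if "j \<noteq> j'" for j j' using that unfolding D_def by auto
  qed
  then have s1: "(\<Sum>f\<in>{f \<in> S. n f = n f0}. cc f * M (f(k := 0))) = 0" using Yk_nz by simp
  have injS: "inj_on (\<lambda>f. f(k := 0)) {f \<in> S. n f = n f0}"
    by (rule inj_on_subset[OF upd_inj[of "f0 k"]]) (auto simp: n_def)
  have "cc f0 = 0"
    by (rule X.indep_inj[OF _ _ injS _ s1]) (use S ccA upd_z f0 in auto)
  then show "c f0 = 0" unfolding cc_def using t_nz[OF ct] by simp
qed

sublocale Xm: monsys t N Xp
proof
  show "central_transcendental t" by (rule ct)
  show "Xp 0 = 1" by (rule Xp0)
  show "\<exists>e. Xp f * Xp g = t powi e * Xp (f + g)" if "f \<in> zvec N" "g \<in> zvec N" for f g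
    by (rule Xp_mult[OF that])
  show "\<forall>f\<in>S. c f = 0" if "finite S" "S \<subseteq> zvec N" "\<forall>f\<in>S. c f \<in> laurent_ring t" "(\<Sum>f\<in>S. c f * Xp f) = 0" for S c
    by (rule indepXp[OF that])
qed

end


context seed
begin

lemma Xp_ek: "Xp (unitv k) = Yk"
proof -
  have "(unitv k)(k := 0) = 0" by (simp add: unitv_def fun_eq_iff)
  then show ?thesis unfolding Xp_def using X0 by (simp add: unitv_def)
qed

lemma Xp_mek: "Xp (- unitv k) = inverse Yk"
proof -
  have "(- unitv k)(k := 0) = 0" by (simp add: unitv_def fun_eq_iff)
  moreover have "(- unitv k) k = - 1" by (simp add: unitv_def)
  ultimately show ?thesis unfolding Xp_def using X0 by simp
qed

lemma Xp_ei: "i \<noteq> k \<Longrightarrow> Xp (unitv i) = M (unitv i)"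
proof -
  assume ik: "i \<noteq> k"
  have "(unitv i)(k := 0) = unitv i" using ik by (simp add: unitv_def fun_eq_iff)
  moreover have "unitv i k = 0" using ik by (simp add: unitv_def)
  ultimately show ?thesis unfolding Xp_def by simp
qed

lemma Xp_mei: "i \<noteq> k \<Longrightarrow> Xp (- unitv i) = M (- unitv i)"
proof -
  assume ik: "i \<noteq> k"
  have "(- unitv i)(k := 0) = - unitv i" using ik by (simp add: unitv_def fun_eq_iff)
  moreover have "(- unitv i) k = 0" using ik by (simp add: unitv_def)
  ultimately show ?thesis unfolding Xp_def by simp
qed

lemma Xp_va: "Xp va = M va"
proof -
  have "va(k := 0) = va" using va_k by (simp add: fun_eq_iff)
  then show ?thesis unfolding Xp_def using va_k by simp
qed

lemma Xp_vb: "Xp vb = M vb"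
proof -
  have "vb(k := 0) = vb" using vb_k by (simp add: fun_eq_iff)
  then show ?thesis unfolding Xp_def using vb_k by simp
qed

lemma Cc_upd: "f \<in> Cc \<Longrightarrow> f(k := 0) \<in> Cc"
  unfolding Cc_def using upd_z by auto

lemma Ypowi_T': "Yk powi n \<in> TT'"
proof (cases "n \<ge> 0")
  case True
  then show ?thesis using Tge_pow[OF Yk_T' ct] by (simp add: power_int_def)
next
  case False
  then show ?thesis using Tge_pow[OF Yinv_T' ct] by (simp add: power_int_def)
qed

lemma T'_sub: "x \<in> TT' \<Longrightarrow> x \<in> Xm.Lin Cc"
proof (induction rule: Tge.induct)
  case (scalar a) then show ?case using Xm.Lin_A Cc_0 by blast
next
  case (gen i)
  show ?case
  proof (cases "i = k")
    case True
    then show ?thesis using Xm.Lin_mon[OF Cc_unit[OF gen]] Xp_ek mb_k by simp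
  next
    case False
    then show ?thesis using Xm.Lin_mon[OF Cc_unit[OF gen]] Xp_ei[OF False] mb_ne[OF False] by simp
  qed
next
  case (geninv j)
  show ?case
  proof (cases "j = k")
    case True
    then show ?thesis using Xm.Lin_mon[OF Cc_munit[OF geninv]] Xp_mek mb_k by simp
  next
    case False
    have jN: "j \<in> {1..N}" using exinv_N[OF geninv] .
    have "inverse (mut_basis N M B k j) = Xp (- unitv j)"
      using X_inv[OF unit_z[OF jN]] mb_ne[OF False] Xp_mei[OF False] by simp
    then show ?thesis using Xm.Lin_mon[OF Cc_munit[OF geninv]] by simp
  qed
next
  case (add x y) then show ?case using Xm.Lin_add by blast
next
  case (mult x y) then show ?case using Xm.Lin_mult[OF Cc_z Cc_z Cc_add] by blast
qed

lemma T'_sup: "x \<in> Xm.Lin Cc \<Longrightarrow> x \<in> TT'"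
proof -
  assume "x \<in> Xm.Lin Cc"
  then obtain S c where S: "finite S" "S \<subseteq> Cc" "\<And>f. f \<in> S \<Longrightarrow> c f \<in> laurent_ring t" "x = (\<Sum>f\<in>S. c f * Xp f)"
    using Xm.LinE by blast
  show ?thesis unfolding S(4)
  proof (rule Tge_sum[OF ct])
    fix f assume f: "f \<in> S"
    have "c f \<in> TT'" using S(3)[OF f] by (rule Tge.scalar)
    moreover have "Xp f \<in> TT'"
    proof -
      have "f(k := 0) \<in> Cc" using Cc_upd f S(2) by blast
      then have "M (f(k := 0)) \<in> TT'" using X_in_T' by simp
      then show ?thesis unfolding Xp_def using Ypowi_T' TT'_mult by blast
    qed
    ultimately show "c f * Xp f \<in> TT'" by (rule Tge.mult)
  qed
qed

lemma ModP_T':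
  assumes pA: "p \<in> laurent_ring t" and x: "x \<in> TT'" and q: "q \<in> QQ" and xq: "x * q \<in> smul_set p TT'"
  shows "x \<in> smul_set p TT'"
proof -
  have xL: "x \<in> Xm.Lin Cc" using T'_sub[OF x] .
  have q': "q \<in> qset t (Xp va) (Xp vb)" using q Xp_va Xp_vb by simp
  have "x * q \<in> smul_set p (Xm.Lin (zvec N))"
    using xq T'_sub Xm.Lin_mono[OF Cc_z] unfolding smul_set_def by blast
  then have "x \<in> smul_set p (Xm.Lin Cc)" using Xm.ModP_prod[OF pA va_z vb_z va_ne q' Cc_z xL] by blast
  then show ?thesis using T'_sup unfolding smul_set_def by blast
qed

theorem main_seed:
  assumes pA: "p \<in> laurent_ring t"
  shows "TT \<inter> smul_set p TT' = smul_set p TT \<inter> TT'"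
proof -
  have I1: "TT \<inter> smul_set p TT' \<subseteq> smul_set p TT \<inter> TT'"
    by (rule dir_incl[where Q=QQ]) (use loc_T'T ModP_T[OF pA] Tge.scalar[OF pA] TT'_mult in auto)
  have I2: "TT' \<inter> smul_set p TT \<subseteq> smul_set p TT' \<inter> TT"
    by (rule dir_incl[where Q=QQ]) (use loc_TT' ModP_T'[OF pA] Tge.scalar[OF pA] TT_mult in auto)
  show ?thesis using I1 I2 by blast
qed

end

theorem proposition5p10:
  fixes t :: "'f::division_ring" and N :: nat and ex inv :: "nat set"
    and M :: "(nat \<Rightarrow> int) \<Rightarrow> 'f" and B :: "nat \<Rightarrow> nat \<Rightarrow> int" and p :: 'f and k :: nat
  assumes "central_transcendental t"
    and "ex \<subseteq> {1..N}"
    and "inv \<subseteq> {1..N} - ex"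
    and "quantum_seed t N ex M B"
    and "A_prime t p"
    and "k \<in> ex"
  shows "Tge t N ex inv (\<lambda>j. M (unitv j)) \<inter> smul_set p (Tge t N ex inv (mut_basis N M B k))
       = smul_set p (Tge t N ex inv (\<lambda>j. M (unitv j))) \<inter> Tge t N ex inv (mut_basis N M B k)"
proof -
  obtain L where L: "toric_frame t N M L" "compatible N ex L B"
    using assms(4) unfolding quantum_seed_def by blast
  obtain d where d: "\<forall>j\<in>ex. d j > 0"
    "\<forall>i\<in>{1..N}. \<forall>j\<in>ex. (\<Sum>l\<in>{1..N}. B l j * L l i) = (if i = j then d j else 0)"
    using L(2) unfolding compatible_def by blast
  interpret S: seed t N ex inv M B k L d
    by (rule seed.intro) (use assms L d in auto)
  have pA: "p \<in> laurent_ring t" using assms(5) unfolding A_prime_def by blast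
  show ?thesis by (rule S.main_seed[OF pA])
qed


end
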